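(* Let $\mathbb{D}$ be a virtual double category. Then $\mathbb{D}$ has decomposable multicells if and only if every multicell of $\mathbb{D}$ admits essentially unique decompositions of every shape given by a tree of height $2$ with the appropriate number of leaves.
   Context: A virtual double category (VDC) has objects, tight arrows forming a category, loose arrows $x\nrightarrow y$, and $n$-ary multicells ($n\ge0$) with a composable path of $n$ loose arrows as loose source, one loose arrow as loose target and two tight arrows as tight sides, together with identity unary multicells and an associative unital composition $\frac{\alpha_1\cdots\alpha_m}{\beta}$ pasting a compatible row of multicells onto an $m$-ary multicell (whiskering by a tight arrow when $m=0$). A tree is a rooted finite planar tree all of whose leaves are at the same distance from the root; its height is the number of layers of vertices (layer 1 contains the root). For an $m$-ary multicell $\alpha$ and a tree $T$ of height $h$ with $m$ leaves, a decomposition of $\alpha$ of shape $T$ assigns to each vertex with $k$ inputs a $k$-ary multicell, such that each layer forms a compatible row of multicells, the loose targets of layer $i+1$ are in order the loose sources of layer $i$ (interface $i$), and the iterated composite is $\alpha$. A morphism $P\to Q$ of such decompositions consists of compatible rows $\sigma_i$ ($1\le i\le h-1$) of unary multicells from interface $i$ of $P$ to interface $i$ of $Q$, with $\sigma_0,\sigma_h$ identities, such that for each layer $i$, layer $i$ of $P$ followed by $\sigma_{i-1}$ equals $\sigma_i$ followed by layer $i$ of $Q$. Two decompositions are equivalent if connected by a zigzag of morphisms. $\alpha$ admits essentially unique decompositions of shape $T$ if it has at least one and any two are equivalent. $\mathbb{D}$ has decomposable multicells if every multicell admits essentially unique decompositions of every shape of every height $\ge2$ (with the right number of leaves). *)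

theory Defs
  imports Main
begin

text \<open>Tight arrows: Tight with tdom, tcod, identities tid and composition tcomp g f (= g after f).
  Multicells: Cell with loose source csrc (a path of loose arrows starting at tdom (cleft a)
  and ending at tdom (cright a)), loose target ctgt and tight sides cleft, cright.
  A compatible row of multicells is a pair (f, cs) of a tight arrow f (its left boundary)
  and a list of multicells cs, consecutive ones sharing tight sides, with cleft (hd cs) = f
  when cs is nonempty; a row of length 0 is thus just a tight arrow.
  comp f cs b is the composite of the row (f, cs) pasted onto the multicell b
  (whiskering by f when cs is empty).\<close>

record ('o, 't, 'l, 'c) vdc =
  Ob :: "'o set"
  Tight :: "'t set"
  tdom :: "'t \<Rightarrow> 'o"
  tcod :: "'t \<Rightarrow> 'o"
  tid :: "'o \<Rightarrow> 't"
  tcomp :: "'t \<Rightarrow> 't \<Rightarrow> 't"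
  Loose :: "'l set"
  ldom :: "'l \<Rightarrow> 'o"
  lcod :: "'l \<Rightarrow> 'o"
  Cell :: "'c set"
  csrc :: "'c \<Rightarrow> 'l list"
  ctgt :: "'c \<Rightarrow> 'l"
  cleft :: "'c \<Rightarrow> 't"
  cright :: "'c \<Rightarrow> 't"
  cid :: "'l \<Rightarrow> 'c"
  comp :: "'t \<Rightarrow> 'c list \<Rightarrow> 'c \<Rightarrow> 'c"

fun is_path :: "('o, 't, 'l, 'c, 'm) vdc_scheme \<Rightarrow> 'o \<Rightarrow> 'l list \<Rightarrow> 'o \<Rightarrow> bool" where
  "is_path D x [] y = (x = y \<and> x \<in> Ob D)"
| "is_path D x (p # ps) y = (p \<in> Loose D \<and> ldom D p = x \<and> is_path D (lcod D p) ps y)"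

definition is_row :: "('o, 't, 'l, 'c, 'm) vdc_scheme \<Rightarrow> 't \<Rightarrow> 'c list \<Rightarrow> bool" where
  "is_row D f cs \<longleftrightarrow> f \<in> Tight D \<and> set cs \<subseteq> Cell D
     \<and> (cs \<noteq> [] \<longrightarrow> cleft D (hd cs) = f)
     \<and> (\<forall>j. Suc j < length cs \<longrightarrow> cright D (cs ! j) = cleft D (cs ! Suc j))"

definition row_right :: "('o, 't, 'l, 'c, 'm) vdc_scheme \<Rightarrow> 't \<Rightarrow> 'c list \<Rightarrow> 't" where
  "row_right D f cs = (if cs = [] then f else cright D (last cs))"

text \<open>The tight arrow at boundary position j of a row (0 = left boundary).\<close>
definition bnd :: "('o, 't, 'l, 'c, 'm) vdc_scheme \<Rightarrow> 't \<Rightarrow> 'c list \<Rightarrow> nat \<Rightarrow> 't" where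
  "bnd D f cs j = (if j = 0 then f else cright D (cs ! (j - 1)))"

text \<open>Offset in the upper row where the cells above the j-th cell of ds start.\<close>
definition off :: "('o, 't, 'l, 'c, 'm) vdc_scheme \<Rightarrow> 'c list \<Rightarrow> nat \<Rightarrow> nat" where
  "off D ds j = sum_list (map (\<lambda>d. length (csrc D d)) (take j ds))"

text \<open>Vertical composite of the row R (on top) with the row S (below).\<close>
definition rowcomp :: "('o, 't, 'l, 'c, 'm) vdc_scheme \<Rightarrow> 't \<times> 'c list \<Rightarrow> 't \<times> 'c list \<Rightarrow> 't \<times> 'c list" where
  "rowcomp D R S =
     (tcomp D (fst S) (fst R),
      map (\<lambda>j. comp D (bnd D (fst R) (snd R) (off D (snd S) j))
                       (take (length (csrc D (snd S ! j))) (drop (off D (snd S) j) (snd R)))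
                       (snd S ! j))
          [0..<length (snd S)])"

definition comp_ok :: "('o, 't, 'l, 'c, 'm) vdc_scheme \<Rightarrow> 't \<Rightarrow> 'c list \<Rightarrow> 'c \<Rightarrow> bool" where
  "comp_ok D f cs b \<longleftrightarrow> is_row D f cs \<and> b \<in> Cell D \<and> map (ctgt D) cs = csrc D b
     \<and> tcod D f = tdom D (cleft D b) \<and> tcod D (row_right D f cs) = tdom D (cright D b)"

definition vdc :: "('o, 't, 'l, 'c, 'm) vdc_scheme \<Rightarrow> bool" where
  "vdc D \<longleftrightarrow>
    \<comment> \<open>tight arrows form a category\<close>
    (\<forall>f \<in> Tight D. tdom D f \<in> Ob D \<and> tcod D f \<in> Ob D)
  \<and> (\<forall>x \<in> Ob D. tid D x \<in> Tight D \<and> tdom D (tid D x) = x \<and> tcod D (tid D x) = x)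
  \<and> (\<forall>f \<in> Tight D. \<forall>g \<in> Tight D. tdom D g = tcod D f \<longrightarrow>
        tcomp D g f \<in> Tight D \<and> tdom D (tcomp D g f) = tdom D f \<and> tcod D (tcomp D g f) = tcod D g)
  \<and> (\<forall>f \<in> Tight D. tcomp D f (tid D (tdom D f)) = f \<and> tcomp D (tid D (tcod D f)) f = f)
  \<and> (\<forall>f \<in> Tight D. \<forall>g \<in> Tight D. \<forall>h \<in> Tight D. tdom D g = tcod D f \<and> tdom D h = tcod D g \<longrightarrow>
        tcomp D h (tcomp D g f) = tcomp D (tcomp D h g) f)
    \<comment> \<open>loose arrows\<close>
  \<and> (\<forall>p \<in> Loose D. ldom D p \<in> Ob D \<and> lcod D p \<in> Ob D)
    \<comment> \<open>boundaries of multicells\<close>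
  \<and> (\<forall>a \<in> Cell D. cleft D a \<in> Tight D \<and> cright D a \<in> Tight D \<and> ctgt D a \<in> Loose D
        \<and> is_path D (tdom D (cleft D a)) (csrc D a) (tdom D (cright D a))
        \<and> tcod D (cleft D a) = ldom D (ctgt D a) \<and> tcod D (cright D a) = lcod D (ctgt D a))
    \<comment> \<open>identity unary multicells\<close>
  \<and> (\<forall>p \<in> Loose D. cid D p \<in> Cell D \<and> csrc D (cid D p) = [p] \<and> ctgt D (cid D p) = p
        \<and> cleft D (cid D p) = tid D (ldom D p) \<and> cright D (cid D p) = tid D (lcod D p))
    \<comment> \<open>composition and its boundaries\<close>
  \<and> (\<forall>f cs b. comp_ok D f cs b \<longrightarrow>
        comp D f cs b \<in> Cell D \<and> csrc D (comp D f cs b) = concat (map (csrc D) cs)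
        \<and> ctgt D (comp D f cs b) = ctgt D b
        \<and> cleft D (comp D f cs b) = tcomp D (cleft D b) f
        \<and> cright D (comp D f cs b) = tcomp D (cright D b) (row_right D f cs))
    \<comment> \<open>unit laws\<close>
  \<and> (\<forall>b \<in> Cell D. comp D (tid D (tdom D (cleft D b))) (map (cid D) (csrc D b)) b = b)
  \<and> (\<forall>a \<in> Cell D. comp D (cleft D a) [a] (cid D (ctgt D a)) = a)
    \<comment> \<open>associativity\<close>
  \<and> (\<forall>f es g ds b. comp_ok D g ds b \<and> is_row D f es \<and> map (ctgt D) es = concat (map (csrc D) ds)
        \<and> tcod D f = tdom D g \<and> tcod D (row_right D f es) = tdom D (row_right D g ds) \<longrightarrow>
        comp D f es (comp D g ds b) =
          comp D (fst (rowcomp D (f, es) (g, ds))) (snd (rowcomp D (f, es) (g, ds))) b)"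

text \<open>A (planar, levelled) tree of height h is the list of its h layers of vertices,
  each layer listed left to right by the number of inputs of each vertex;
  layer 1 consists of the root only and the vertices of layer i+1 are the inputs of
  the vertices of layer i.\<close>

definition valid_tree :: "nat list list \<Rightarrow> bool" where
  "valid_tree T \<longleftrightarrow> T \<noteq> [] \<and> length (T ! 0) = 1
     \<and> (\<forall>i. Suc i < length T \<longrightarrow> length (T ! Suc i) = sum_list (T ! i))"

definition tree_height :: "nat list list \<Rightarrow> nat" where
  "tree_height T = length T"

definition tree_leaves :: "nat list list \<Rightarrow> nat" where
  "tree_leaves T = sum_list (last T)"

text \<open>Iterated composite of the layers (layer 1 = P ! 0).\<close>
definition iter_comp :: "('o, 't, 'l, 'c, 'm) vdc_scheme \<Rightarrow> ('t \<times> 'c list) list \<Rightarrow> 'c" where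
  "iter_comp D P = foldl (\<lambda>acc r. comp D (fst r) (snd r) acc) (hd (snd (hd P))) (tl P)"

definition is_decomp :: "('o, 't, 'l, 'c, 'm) vdc_scheme \<Rightarrow> 'c \<Rightarrow> nat list list \<Rightarrow> ('t \<times> 'c list) list \<Rightarrow> bool" where
  "is_decomp D a T P \<longleftrightarrow> a \<in> Cell D \<and> valid_tree T \<and> length P = length T
     \<and> (\<forall>i < length T. is_row D (fst (P ! i)) (snd (P ! i))
            \<and> map (\<lambda>c. length (csrc D c)) (snd (P ! i)) = T ! i)
     \<and> (\<forall>i. Suc i < length T \<longrightarrow>
            map (ctgt D) (snd (P ! Suc i)) = concat (map (csrc D) (snd (P ! i)))
            \<and> tcod D (fst (P ! Suc i)) = tdom D (fst (P ! i))
            \<and> tcod D (row_right D (fst (P ! Suc i)) (snd (P ! Suc i)))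
                = tdom D (row_right D (fst (P ! i)) (snd (P ! i))))
     \<and> iter_comp D P = a"

definition id_row :: "('o, 't, 'l, 'c, 'm) vdc_scheme \<Rightarrow> 'o \<Rightarrow> 'l list \<Rightarrow> 't \<times> 'c list" where
  "id_row D x ps = (tid D x, map (cid D) ps)"

text \<open>Interface k (1 \<le> k \<le> h-1) of a decomposition: the loose sources of layer k,
  with their start and end objects.\<close>
definition iface :: "('o, 't, 'l, 'c, 'm) vdc_scheme \<Rightarrow> ('t \<times> 'c list) list \<Rightarrow> nat \<Rightarrow> 'o \<times> 'l list \<times> 'o" where
  "iface D P k = (tdom D (fst (P ! (k - 1))),
                  concat (map (csrc D) (snd (P ! (k - 1)))),
                  tdom D (row_right D (fst (P ! (k - 1))) (snd (P ! (k - 1)))))"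

definition row_between :: "('o, 't, 'l, 'c, 'm) vdc_scheme \<Rightarrow> 'o \<times> 'l list \<times> 'o \<Rightarrow> 'o \<times> 'l list \<times> 'o \<Rightarrow> 't \<times> 'c list \<Rightarrow> bool" where
  "row_between D A B S \<longleftrightarrow> (case A of (x, ps, y) \<Rightarrow> case B of (x', qs, y') \<Rightarrow>
      is_row D (fst S) (snd S) \<and> length (snd S) = length ps \<and> length qs = length ps
      \<and> (\<forall>j < length ps. csrc D (snd S ! j) = [ps ! j] \<and> ctgt D (snd S ! j) = qs ! j)
      \<and> tdom D (fst S) = x \<and> tcod D (fst S) = x'
      \<and> tdom D (row_right D (fst S) (snd S)) = y \<and> tcod D (row_right D (fst S) (snd S)) = y')"

text \<open>sigma is a morphism of decompositions P \<rightarrow> Q of a of shape T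
  (sigma ! i is the row sigma_i, for 0 \<le> i \<le> h).\<close>
definition decomp_morph :: "('o, 't, 'l, 'c, 'm) vdc_scheme \<Rightarrow> 'c \<Rightarrow> nat list list
    \<Rightarrow> ('t \<times> 'c list) list \<Rightarrow> ('t \<times> 'c list) list \<Rightarrow> ('t \<times> 'c list) list \<Rightarrow> bool" where
  "decomp_morph D a T P Q sigma \<longleftrightarrow>
     is_decomp D a T P \<and> is_decomp D a T Q \<and> length sigma = length T + 1
     \<and> sigma ! 0 = id_row D (ldom D (ctgt D a)) [ctgt D a]
     \<and> sigma ! length T = id_row D (tdom D (cleft D a)) (csrc D a)
     \<and> (\<forall>k. 1 \<le> k \<and> k < length T \<longrightarrow> row_between D (iface D P k) (iface D Q k) (sigma ! k))
     \<and> (\<forall>i < length T. rowcomp D (P ! i) (sigma ! i) = rowcomp D (sigma ! Suc i) (Q ! i))"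

definition has_decomp_morph :: "('o, 't, 'l, 'c, 'm) vdc_scheme \<Rightarrow> 'c \<Rightarrow> nat list list
    \<Rightarrow> ('t \<times> 'c list) list \<Rightarrow> ('t \<times> 'c list) list \<Rightarrow> bool" where
  "has_decomp_morph D a T P Q \<longleftrightarrow> (\<exists>sigma. decomp_morph D a T P Q sigma)"

definition decomp_equiv :: "('o, 't, 'l, 'c, 'm) vdc_scheme \<Rightarrow> 'c \<Rightarrow> nat list list
    \<Rightarrow> ('t \<times> 'c list) list \<Rightarrow> ('t \<times> 'c list) list \<Rightarrow> bool" where
  "decomp_equiv D a T =
     (\<lambda>P Q. has_decomp_morph D a T P Q \<or> has_decomp_morph D a T Q P)\<^sup>*\<^sup>*"

definition ess_unique_decomp :: "('o, 't, 'l, 'c, 'm) vdc_scheme \<Rightarrow> 'c \<Rightarrow> nat list list \<Rightarrow> bool" where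
  "ess_unique_decomp D a T \<longleftrightarrow> (\<exists>P. is_decomp D a T P)
     \<and> (\<forall>P Q. is_decomp D a T P \<and> is_decomp D a T Q \<longrightarrow> decomp_equiv D a T P Q)"

definition has_decomposable_multicells :: "('o, 't, 'l, 'c, 'm) vdc_scheme \<Rightarrow> bool" where
  "has_decomposable_multicells D \<longleftrightarrow>
     (\<forall>a \<in> Cell D. \<forall>T. valid_tree T \<and> tree_height T \<ge> 2 \<and> tree_leaves T = length (csrc D a)
        \<longrightarrow> ess_unique_decomp D a T)"

end

theory Submission
  imports Defs
begin


lemma vdc_tight: "vdc D \<Longrightarrow> f \<in> Tight D \<Longrightarrow> tdom D f \<in> Ob D \<and> tcod D f \<in> Ob D"
  unfolding vdc_def by (elim conjE) blast
lemma vdc_tid: "vdc D \<Longrightarrow> x \<in> Ob D \<Longrightarrow> tid D x \<in> Tight D \<and> tdom D (tid D x) = x \<and> tcod D (tid D x) = x"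
  unfolding vdc_def by (elim conjE) blast
lemma vdc_tcomp: "vdc D \<Longrightarrow> f \<in> Tight D \<Longrightarrow> g \<in> Tight D \<Longrightarrow> tdom D g = tcod D f \<Longrightarrow>
        tcomp D g f \<in> Tight D \<and> tdom D (tcomp D g f) = tdom D f \<and> tcod D (tcomp D g f) = tcod D g"
  unfolding vdc_def by (elim conjE) blast
lemma vdc_tunit: "vdc D \<Longrightarrow> f \<in> Tight D \<Longrightarrow> tcomp D f (tid D (tdom D f)) = f \<and> tcomp D (tid D (tcod D f)) f = f"
  unfolding vdc_def by (elim conjE) blast
lemma vdc_loose: "vdc D \<Longrightarrow> p \<in> Loose D \<Longrightarrow> ldom D p \<in> Ob D \<and> lcod D p \<in> Ob D"
  unfolding vdc_def by (elim conjE) blast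
lemma vdc_cell: "vdc D \<Longrightarrow> a \<in> Cell D \<Longrightarrow> cleft D a \<in> Tight D \<and> cright D a \<in> Tight D \<and> ctgt D a \<in> Loose D
        \<and> is_path D (tdom D (cleft D a)) (csrc D a) (tdom D (cright D a))
        \<and> tcod D (cleft D a) = ldom D (ctgt D a) \<and> tcod D (cright D a) = lcod D (ctgt D a)"
  unfolding vdc_def by (elim conjE) blast
lemma vdc_cid: "vdc D \<Longrightarrow> p \<in> Loose D \<Longrightarrow> cid D p \<in> Cell D \<and> csrc D (cid D p) = [p] \<and> ctgt D (cid D p) = p
        \<and> cleft D (cid D p) = tid D (ldom D p) \<and> cright D (cid D p) = tid D (lcod D p)"
  unfolding vdc_def by (elim conjE) blast
lemma vdc_comp: "vdc D \<Longrightarrow> comp_ok D f cs b \<Longrightarrow>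
        comp D f cs b \<in> Cell D \<and> csrc D (comp D f cs b) = concat (map (csrc D) cs)
        \<and> ctgt D (comp D f cs b) = ctgt D b
        \<and> cleft D (comp D f cs b) = tcomp D (cleft D b) f
        \<and> cright D (comp D f cs b) = tcomp D (cright D b) (row_right D f cs)"
  unfolding vdc_def by (elim conjE) blast
lemma vdc_unit1: "vdc D \<Longrightarrow> b \<in> Cell D \<Longrightarrow> comp D (tid D (tdom D (cleft D b))) (map (cid D) (csrc D b)) b = b"
  unfolding vdc_def by (elim conjE) blast
lemma vdc_unit2: "vdc D \<Longrightarrow> a \<in> Cell D \<Longrightarrow> comp D (cleft D a) [a] (cid D (ctgt D a)) = a"
  unfolding vdc_def by (elim conjE) blast
lemma vdc_assoc: "vdc D \<Longrightarrow> comp_ok D g ds b \<Longrightarrow> is_row D f es \<Longrightarrow> map (ctgt D) es = concat (map (csrc D) ds)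
        \<Longrightarrow> tcod D f = tdom D g \<Longrightarrow> tcod D (row_right D f es) = tdom D (row_right D g ds) \<Longrightarrow>
        comp D f es (comp D g ds b) =
          comp D (fst (rowcomp D (f, es) (g, ds))) (snd (rowcomp D (f, es) (g, ds))) b"
  proof -
  assume a: "vdc D" "comp_ok D g ds b" "is_row D f es" "map (ctgt D) es = concat (map (csrc D) ds)"
        "tcod D f = tdom D g" "tcod D (row_right D f es) = tdom D (row_right D g ds)"
  have "\<forall>f es g ds b. comp_ok D g ds b \<and> is_row D f es \<and> map (ctgt D) es = concat (map (csrc D) ds)
        \<and> tcod D f = tdom D g \<and> tcod D (row_right D f es) = tdom D (row_right D g ds) \<longrightarrow>
        comp D f es (comp D g ds b) =
          comp D (fst (rowcomp D (f, es) (g, ds))) (snd (rowcomp D (f, es) (g, ds))) b"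
    using a(1) unfolding vdc_def by (elim conjE) assumption
  then have "comp_ok D g ds b \<and> is_row D f es \<and> map (ctgt D) es = concat (map (csrc D) ds)
        \<and> tcod D f = tdom D g \<and> tcod D (row_right D f es) = tdom D (row_right D g ds) \<longrightarrow>
        comp D f es (comp D g ds b) =
          comp D (fst (rowcomp D (f, es) (g, ds))) (snd (rowcomp D (f, es) (g, ds))) b"
    by (elim allE)
  then show ?thesis using a by (elim impE) auto
qed

lemma is_path_Ob: "vdc D \<Longrightarrow> is_path D x ps y \<Longrightarrow> x \<in> Ob D \<and> y \<in> Ob D"
  by (induction ps arbitrary: x) (auto dest: vdc_loose)

lemma is_path_append: "vdc D \<Longrightarrow> is_path D x (ps @ qs) z \<longleftrightarrow> (\<exists>y. is_path D x ps y \<and> is_path D y qs z)"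
  by (induction ps arbitrary: x) (auto dest: is_path_Ob)

lemma is_path_last: "is_path D x ps y \<Longrightarrow> ps \<noteq> [] \<Longrightarrow> lcod D (last ps) = y"
  by (induction ps arbitrary: x) (auto split: if_splits)

lemma is_row_Nil[simp]: "is_row D f [] \<longleftrightarrow> f \<in> Tight D"
  by (simp add: is_row_def)

lemma is_row_Cons: "vdc D \<Longrightarrow> is_row D f (c # cs) \<longleftrightarrow> f \<in> Tight D \<and> c \<in> Cell D \<and> cleft D c = f \<and> is_row D (cright D c) cs"
proof
  assume v: "vdc D" and r: "is_row D f (c # cs)"
  then have c: "c \<in> Cell D" by (simp add: is_row_def)
  have "\<forall>j. Suc j < length cs \<longrightarrow> cright D (cs ! j) = cleft D (cs ! Suc j)"
  proof (intro allI impI)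
    fix j assume "Suc j < length cs"
    with r have "cright D ((c#cs) ! Suc j) = cleft D ((c#cs) ! Suc (Suc j))"
      unfolding is_row_def by (metis Suc_less_eq length_Cons)
    then show "cright D (cs ! j) = cleft D (cs ! Suc j)" by simp
  qed
  moreover have "cs \<noteq> [] \<longrightarrow> cleft D (hd cs) = cright D c"
  proof
    assume "cs \<noteq> []"
    with r have "cright D ((c#cs) ! 0) = cleft D ((c#cs) ! Suc 0)"
      unfolding is_row_def by (metis Suc_less_eq length_Cons length_greater_0_conv)
    then show "cleft D (hd cs) = cright D c" using \<open>cs \<noteq> []\<close> by (simp add: hd_conv_nth)
  qed
  ultimately show "f \<in> Tight D \<and> c \<in> Cell D \<and> cleft D c = f \<and> is_row D (cright D c) cs"
    using r v c vdc_cell[OF v c] unfolding is_row_def by auto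
next
  assume v: "vdc D" and h: "f \<in> Tight D \<and> c \<in> Cell D \<and> cleft D c = f \<and> is_row D (cright D c) cs"
  show "is_row D f (c # cs)"
    unfolding is_row_def
  proof (intro conjI allI impI)
    fix j assume j: "Suc j < length (c # cs)"
    show "cright D ((c # cs) ! j) = cleft D ((c # cs) ! Suc j)"
    proof (cases j)
      case 0 then show ?thesis using h j by (auto simp: is_row_def hd_conv_nth)
    next
      case (Suc k) then show ?thesis using h j by (auto simp: is_row_def)
    qed
  qed (use h in \<open>auto simp: is_row_def\<close>)
qed

lemma row_right_Nil[simp]: "row_right D f [] = f"
  by (simp add: row_right_def)
lemma row_right_Cons[simp]: "row_right D f (c # cs) = row_right D (cright D c) cs"
  by (simp add: row_right_def)
lemma row_right_append: "row_right D f (xs @ ys) = row_right D (row_right D f xs) ys"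
  by (induction xs arbitrary: f) auto

lemma is_row_Tight: "is_row D f cs \<Longrightarrow> f \<in> Tight D"
  by (simp add: is_row_def)

lemma is_row_append: "vdc D \<Longrightarrow> is_row D f (xs @ ys) \<longleftrightarrow> is_row D f xs \<and> is_row D (row_right D f xs) ys"
  by (induction xs arbitrary: f) (auto simp: is_row_Cons dest: is_row_Tight)

lemma row_right_Tight: "vdc D \<Longrightarrow> is_row D f cs \<Longrightarrow> row_right D f cs \<in> Tight D"
  by (induction cs arbitrary: f) (auto simp: is_row_Cons)

lemma is_row_cells: "is_row D f cs \<Longrightarrow> set cs \<subseteq> Cell D"
  by (simp add: is_row_def)

lemma row_path: "vdc D \<Longrightarrow> is_row D f cs \<Longrightarrow>
   is_path D (tdom D f) (concat (map (csrc D) cs)) (tdom D (row_right D f cs))"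
proof (induction cs arbitrary: f)
  case Nil then show ?case by (auto dest: vdc_tight)
next
  case (Cons c cs)
  then have "is_path D (tdom D (cleft D c)) (csrc D c) (tdom D (cright D c))" "cleft D c = f"
     "is_row D (cright D c) cs" by (auto simp: is_row_Cons dest: vdc_cell)
  with Cons show ?case by (auto simp: is_path_append)
qed

lemma row_tcod: "vdc D \<Longrightarrow> is_row D f es \<Longrightarrow> map (ctgt D) es = ps \<Longrightarrow> is_path D x ps y \<Longrightarrow> tcod D f = x
   \<Longrightarrow> tcod D (row_right D f es) = y"
proof (induction es arbitrary: f x ps)
  case Nil then show ?case by auto
next
  case (Cons e es)
  then have e: "e \<in> Cell D" "cleft D e = f" "is_row D (cright D e) es" by (auto simp: is_row_Cons)
  from Cons.prems obtain ps' where ps: "ps = ctgt D e # ps'" "map (ctgt D) es = ps'" by auto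
  with Cons.prems have "is_path D (lcod D (ctgt D e)) ps' y" by auto
  moreover have "tcod D (cright D e) = lcod D (ctgt D e)" using vdc_cell[OF Cons.prems(1) e(1)] by simp
  ultimately show ?case using Cons.IH[OF Cons.prems(1) e(3) ps(2)] by simp
qed



fun rcs :: "('o, 't, 'l, 'c, 'm) vdc_scheme \<Rightarrow> 't \<Rightarrow> 'c list \<Rightarrow> 'c list \<Rightarrow> 'c list" where
  "rcs D f es [] = []"
| "rcs D f es (d # ds) = comp D f (take (length (csrc D d)) es) d
     # rcs D (row_right D f (take (length (csrc D d)) es)) (drop (length (csrc D d)) es) ds"

lemma bnd_shift: "n \<le> length es \<Longrightarrow> bnd D f es (n + k) = bnd D (row_right D f (take n es)) (drop n es) k"
  by (auto simp: bnd_def row_right_def last_conv_nth min_def nth_drop)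

lemma off_Cons0[simp]: "off D (d # ds) 0 = 0" by (simp add: off_def)
lemma off_Suc[simp]: "off D (d # ds) (Suc j) = length (csrc D d) + off D ds j" by (simp add: off_def)

lemma rowcomp_rcs_aux: "length (concat (map (csrc D) ds)) \<le> length es \<Longrightarrow>
  map (\<lambda>j. comp D (bnd D f es (off D ds j))
                       (take (length (csrc D (ds ! j))) (drop (off D ds j) es))
                       (ds ! j)) [0..<length ds] = rcs D f es ds"
proof (induction ds arbitrary: f es)
  case Nil then show ?case by simp
next
  case (Cons d ds)
  let ?n = "length (csrc D d)"
  have n: "?n \<le> length es" using Cons.prems by simp
  have l: "length (concat (map (csrc D) ds)) \<le> length (drop ?n es)" using Cons.prems by simp
  have u: "[0..<length (d # ds)] = 0 # map Suc [0..<length ds]"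
    by (simp add: upt_conv_Cons map_Suc_upt del: upt_Suc)
  have eq: "\<And>j. bnd D f es (off D (d#ds) (Suc j)) = bnd D (row_right D f (take ?n es)) (drop ?n es) (off D ds j)"
    using bnd_shift[OF n] by simp
  have eq0: "bnd D f es (off D (d#ds) 0) = f" by (simp add: bnd_def)
  have eq2: "\<And>j. drop (off D (d#ds) (Suc j)) es = drop (off D ds j) (drop ?n es)"
    by (simp add: add.commute)
  show ?case
    unfolding u list.map map_map o_def
    using Cons.IH[OF l, of "row_right D f (take ?n es)", symmetric] n
      eq eq0 eq2 by (simp del: upt_Suc off_Suc)
qed

lemma rowcomp_rcs: "length (concat (map (csrc D) ds)) \<le> length es \<Longrightarrow>
  rowcomp D (f, es) (g, ds) = (tcomp D g f, rcs D f es ds)"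
  unfolding rowcomp_def using rowcomp_rcs_aux by simp

lemma rcs_right_unit: "vdc D \<Longrightarrow> is_row D f cs \<Longrightarrow> rcs D f cs (map (cid D) (map (ctgt D) cs)) = cs"
proof (induction cs arbitrary: f)
  case Nil then show ?case by simp
next
  case (Cons c cs)
  then have c: "c \<in> Cell D" "cleft D c = f" "is_row D (cright D c) cs" by (auto simp: is_row_Cons)
  have "csrc D (cid D (ctgt D c)) = [ctgt D c]" using vdc_cid[OF Cons.prems(1)] vdc_cell[OF Cons.prems(1) c(1)] by blast
  then show ?case using Cons.IH[OF Cons.prems(1) c(3)] vdc_unit2[OF Cons.prems(1) c(1)] c by simp
qed

lemma len_concat_cid: "vdc D \<Longrightarrow> set cs \<subseteq> Cell D \<Longrightarrow>
   length (concat (map (csrc D) (map (cid D) (map (ctgt D) cs)))) = length cs"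
proof (induction cs)
  case (Cons c cs)
  then have "ctgt D c \<in> Loose D" using vdc_cell[of D c] by simp
  then show ?case using Cons vdc_cid[of D "ctgt D c"] by simp
qed simp

lemma rowcomp_right_unit: "vdc D \<Longrightarrow> is_row D f cs \<Longrightarrow> tcod D f = x \<Longrightarrow>
  rowcomp D (f, cs) (id_row D x (map (ctgt D) cs)) = (f, cs)"
proof -
  assume a: "vdc D" "is_row D f cs" "tcod D f = x"
  have "length (concat (map (csrc D) (map (cid D) (map (ctgt D) cs)))) \<le> length cs"
    using len_concat_cid[OF a(1) is_row_cells[OF a(2)]] by simp
  then have "rowcomp D (f, cs) (id_row D x (map (ctgt D) cs)) = (tcomp D (tid D x) f, cs)"
    unfolding id_row_def by (simp only: rowcomp_rcs rcs_right_unit[OF a(1,2)])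
  also have "tcomp D (tid D x) f = f" using vdc_tunit[OF a(1) is_row_Tight[OF a(2)]] a(3) by simp
  finally show ?thesis .
qed

lemma row_right_tid: "vdc D \<Longrightarrow> is_path D x ps y \<Longrightarrow> row_right D (tid D x) (map (cid D) ps) = tid D y"
proof (induction ps arbitrary: x)
  case (Cons p ps)
  then have "p \<in> Loose D" "is_path D (lcod D p) ps y" by auto
  then show ?case using Cons.IH[OF Cons.prems(1)] vdc_cid[OF Cons.prems(1), of p] by simp
qed simp

lemma rcs_left_unit: "vdc D \<Longrightarrow> is_row D g ds \<Longrightarrow> x = tdom D g \<Longrightarrow>
   rcs D (tid D x) (map (cid D) (concat (map (csrc D) ds))) ds = ds"
proof (induction ds arbitrary: g x)
  case Nil then show ?case by simp
next
  case (Cons d ds)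
  then have d: "d \<in> Cell D" "cleft D d = g" "is_row D (cright D d) ds" by (auto simp: is_row_Cons)
  have p: "is_path D (tdom D (cleft D d)) (csrc D d) (tdom D (cright D d))" using vdc_cell[OF Cons.prems(1) d(1)] by blast
  show ?case using Cons.IH[OF Cons.prems(1) d(3) refl] vdc_unit1[OF Cons.prems(1) d(1)]
      row_right_tid[OF Cons.prems(1) p] d Cons.prems(3) by simp
qed

lemma rowcomp_left_unit: "vdc D \<Longrightarrow> is_row D g ds \<Longrightarrow> x = tdom D g \<Longrightarrow>
  rowcomp D (id_row D x (concat (map (csrc D) ds))) (g, ds) = (g, ds)"
proof -
  assume a: "vdc D" "is_row D g ds" "x = tdom D g"
  have "rowcomp D (id_row D x (concat (map (csrc D) ds))) (g, ds) = (tcomp D g (tid D x), ds)"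
    unfolding id_row_def by (subst rowcomp_rcs) (simp_all add: rcs_left_unit[OF a])
  also have "tcomp D g (tid D x) = g" using vdc_tunit[OF a(1) is_row_Tight[OF a(2)]] a(3) by simp
  finally show ?thesis .
qed



lemma len_concat_unary: "\<forall>e\<in>set es. length (csrc D e) = 1 \<Longrightarrow> length (concat (map (csrc D) es)) = length es"
  by (induction es) auto

lemma rcs_props:
  assumes "vdc D" "is_row D f es" "is_row D g ds" "map (ctgt D) es = concat (map (csrc D) ds)"
    "tcod D f = tdom D g"
  shows "set (rcs D f es ds) \<subseteq> Cell D \<and> map (ctgt D) (rcs D f es ds) = map (ctgt D) ds
   \<and> concat (map (csrc D) (rcs D f es ds)) = concat (map (csrc D) es)
   \<and> is_row D (tcomp D g f) (rcs D f es ds)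
   \<and> row_right D (tcomp D g f) (rcs D f es ds) = tcomp D (row_right D g ds) (row_right D f es)
   \<and> ((\<forall>e\<in>set es. length (csrc D e) = 1) \<longrightarrow>
        map (\<lambda>c. length (csrc D c)) (rcs D f es ds) = map (\<lambda>c. length (csrc D c)) ds)"
  using assms(2-)
proof (induction ds arbitrary: f es g)
  case Nil
  then have "es = []" by simp
  moreover have "tcomp D g f \<in> Tight D"
    using vdc_tcomp[OF assms(1) is_row_Tight[OF Nil(1)] is_row_Tight[OF Nil(2)]] Nil(4) by simp
  ultimately show ?case by simp
next
  case (Cons d ds)
  define n where "n = length (csrc D d)"
  define es1 where "es1 = take n es"
  define es2 where "es2 = drop n es"
  have es: "es = es1 @ es2" by (simp add: es1_def es2_def)
  have m: "map (ctgt D) es = csrc D d @ concat (map (csrc D) ds)" using Cons.prems by simp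
  have m1: "map (ctgt D) es1 = csrc D d" unfolding es1_def n_def using arg_cong[OF m, of "take (length (csrc D d))"] by (simp add: take_map)
  have m2: "map (ctgt D) es2 = concat (map (csrc D) ds)" unfolding es2_def n_def using arg_cong[OF m, of "drop (length (csrc D d))"] by (simp add: drop_map)
  have r1: "is_row D f es1" and r2: "is_row D (row_right D f es1) es2"
    using Cons.prems(1) es is_row_append[OF assms(1)] by auto
  have d: "d \<in> Cell D" "cleft D d = g" "is_row D (cright D d) ds"
    using Cons.prems(2) is_row_Cons[OF assms(1)] by auto
  have dc: "is_path D (tdom D (cleft D d)) (csrc D d) (tdom D (cright D d))" "cleft D d \<in> Tight D"
     "cright D d \<in> Tight D"
    using vdc_cell[OF assms(1) d(1)] by auto
  have tc: "tcod D (row_right D f es1) = tdom D (cright D d)"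
    using row_tcod[OF assms(1) r1 m1 dc(1)] Cons.prems(4) d(2) by simp
  have ok: "comp_ok D f es1 d" unfolding comp_ok_def using r1 d m1 tc Cons.prems(4) by simp
  note c = vdc_comp[OF assms(1) ok]
  have rs: "rcs D f es (d # ds) = comp D f es1 d # rcs D (row_right D f es1) es2 ds"
    by (simp add: es1_def es2_def n_def)
  note IH = Cons.IH[OF r2 d(3) m2 tc]
  have ft: "f \<in> Tight D" using is_row_Tight[OF Cons.prems(1)] .
  have tgf: "tcomp D g f \<in> Tight D" using vdc_tcomp[OF assms(1) ft dc(2)] d(2) Cons.prems(4) by simp
  have "is_row D (tcomp D g f) (rcs D f es (d # ds))"
    unfolding rs is_row_Cons[OF assms(1)] using c IH tgf d(2) by simp
  moreover have "row_right D (tcomp D g f) (rcs D f es (d # ds))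
      = tcomp D (row_right D g (d # ds)) (row_right D f es)"
    unfolding rs using c IH by (simp add: es row_right_append)
  moreover have "(\<forall>e\<in>set es. length (csrc D e) = 1) \<longrightarrow>
        map (\<lambda>c. length (csrc D c)) (rcs D f es (d # ds)) = map (\<lambda>c. length (csrc D c)) (d # ds)"
  proof
    assume u: "\<forall>e\<in>set es. length (csrc D e) = 1"
    then have "length (concat (map (csrc D) es1)) = length es1"
      by (intro len_concat_unary) (simp add: es)
    moreover have "length es1 = n" using m1 n_def by (metis length_map)
    ultimately show "map (\<lambda>c. length (csrc D c)) (rcs D f es (d # ds)) = map (\<lambda>c. length (csrc D c)) (d # ds)"
      unfolding rs using c IH u es n_def by simp
  qed
  ultimately show ?case unfolding rs using c IH es by simp
qed



definition row_ok :: "('o, 't, 'l, 'c, 'm) vdc_scheme \<Rightarrow> 't \<times> 'c list \<Rightarrow> nat list \<Rightarrow> bool" where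
  "row_ok D p t \<longleftrightarrow> is_row D (fst p) (snd p) \<and> map (\<lambda>c. length (csrc D c)) (snd p) = t"

definition lay_ok :: "('o, 't, 'l, 'c, 'm) vdc_scheme \<Rightarrow> 't \<times> 'c list \<Rightarrow> 't \<times> 'c list \<Rightarrow> bool" where
  "lay_ok D p q \<longleftrightarrow> map (ctgt D) (snd q) = concat (map (csrc D) (snd p))
      \<and> tcod D (fst q) = tdom D (fst p)
      \<and> tcod D (row_right D (fst q) (snd q)) = tdom D (row_right D (fst p) (snd p))"

definition stk :: "('o, 't, 'l, 'c, 'm) vdc_scheme \<Rightarrow> nat list list \<Rightarrow> ('t \<times> 'c list) list \<Rightarrow> bool" where
  "stk D T P \<longleftrightarrow> valid_tree T \<and> length P = length T \<and> (\<forall>i<length T. row_ok D (P!i) (T!i))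
     \<and> (\<forall>i. Suc i < length T \<longrightarrow> lay_ok D (P!i) (P!Suc i))"

lemma is_decomp_stk: "is_decomp D a T P \<longleftrightarrow> a \<in> Cell D \<and> stk D T P \<and> iter_comp D P = a"
  unfolding is_decomp_def stk_def row_ok_def lay_ok_def by auto

lemma iter_comp_snoc: "P \<noteq> [] \<Longrightarrow> iter_comp D (P @ [r]) = comp D (fst r) (snd r) (iter_comp D P)"
  unfolding iter_comp_def by (cases P) auto

lemma iter_comp_single: "iter_comp D [p] = hd (snd p)"
  unfolding iter_comp_def by simp

lemma stk_bnd_aux:
  assumes v: "vdc D" and s: "stk D T P" and n: "1 \<le> n" "n \<le> length T"
  shows "iter_comp D (take n P) \<in> Cell D \<and> ctgt D (iter_comp D (take n P)) = ctgt D (hd (snd (P!0)))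
   \<and> csrc D (iter_comp D (take n P)) = concat (map (csrc D) (snd (P!(n-1))))
   \<and> tdom D (cleft D (iter_comp D (take n P))) = tdom D (fst (P!(n-1)))
   \<and> tdom D (cright D (iter_comp D (take n P))) = tdom D (row_right D (fst (P!(n-1))) (snd (P!(n-1))))"
  using n
proof (induction n)
  case 0 then show ?case by simp
next
  case (Suc n)
  have lP: "length P = length T" and vt: "valid_tree T" using s by (auto simp: stk_def)
  show ?case
  proof (cases "n = 0")
    case True
    have ne: "P \<noteq> []" using lP vt by (auto simp: valid_tree_def)
    have r0: "row_ok D (P!0) (T!0)" using s vt by (auto simp: stk_def valid_tree_def)
    then have "length (snd (P!0)) = 1" using vt unfolding row_ok_def valid_tree_def by (metis length_map)
    then obtain c where c: "snd (P!0) = [c]" by (metis One_nat_def length_0_conv length_Suc_conv)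
    have tk: "take (Suc n) P = [P!0]" using True ne by (cases P) auto
    have "is_row D (fst (P!0)) [c]" using r0 c by (simp add: row_ok_def)
    then have "c \<in> Cell D" "cleft D c = fst (P!0)" using is_row_Cons[OF v] by auto
    then show ?thesis using tk c True by (simp add: iter_comp_single)
  next
    case False
    then have n1: "1 \<le> n" "n \<le> length T" "n < length P" using Suc.prems lP by auto
    note IH = Suc.IH[OF n1(1,2)]
    define g where "g = iter_comp D (take n P)"
    have tk: "take (Suc n) P = take n P @ [P!n]" using n1(3) by (simp add: take_Suc_conv_app_nth)
    have ic: "iter_comp D (take (Suc n) P) = comp D (fst (P!n)) (snd (P!n)) g"
      unfolding tk g_def using n1 by (subst iter_comp_snoc) auto
    have ro: "row_ok D (P!n) (T!n)" using s n1 lP by (auto simp: stk_def)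
    have "Suc (n-1) < length T" "Suc (n-1) = n" using n1 lP by auto
    then have lo: "lay_ok D (P!(n-1)) (P!n)" using s unfolding stk_def by metis
    have ok: "comp_ok D (fst (P!n)) (snd (P!n)) g"
      using ro lo IH unfolding comp_ok_def row_ok_def lay_ok_def g_def by simp
    note cc = vdc_comp[OF v ok]
    have gc: "g \<in> Cell D" using IH g_def by simp
    note gcell = vdc_cell[OF v gc]
    have ft: "fst (P!n) \<in> Tight D" using ro by (auto simp: row_ok_def dest: is_row_Tight)
    have rt: "row_right D (fst (P!n)) (snd (P!n)) \<in> Tight D" using ro row_right_Tight[OF v] unfolding row_ok_def by blast
    have t1: "tdom D (tcomp D (cleft D g) (fst (P!n))) = tdom D (fst (P!n))"
      using vdc_tcomp[OF v ft] gcell ok unfolding comp_ok_def by simp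
    have t2: "tdom D (tcomp D (cright D g) (row_right D (fst (P!n)) (snd (P!n)))) = tdom D (row_right D (fst (P!n)) (snd (P!n)))"
      using vdc_tcomp[OF v rt] gcell ok unfolding comp_ok_def by simp
    show ?thesis unfolding ic using cc IH t1 t2 g_def by simp
  qed
qed

lemma stk_bnd:
  assumes v: "vdc D" and s: "stk D T P"
  shows "iter_comp D P \<in> Cell D \<and> ctgt D (iter_comp D P) = ctgt D (hd (snd (P!0)))
   \<and> csrc D (iter_comp D P) = concat (map (csrc D) (snd (last P)))
   \<and> tdom D (cleft D (iter_comp D P)) = tdom D (fst (last P))
   \<and> tdom D (cright D (iter_comp D P)) = tdom D (row_right D (fst (last P)) (snd (last P)))"
proof -
  have lP: "length P = length T" and vt: "T \<noteq> []" using s by (auto simp: stk_def valid_tree_def)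
  then have "P \<noteq> []" by auto
  then have "last P = P ! (length T - 1)" using lP by (simp add: last_conv_nth)
  moreover have "1 \<le> length T" using vt by (cases T) auto
  ultimately show ?thesis using stk_bnd_aux[OF v s, of "length T"] lP by simp
qed



lemma stk_snoc:
  assumes ne: "T' \<noteq> []" and l: "length P' = length T'"
  shows "stk D (T' @ [t]) (P' @ [r]) \<longleftrightarrow>
     stk D T' P' \<and> length t = sum_list (last T') \<and> row_ok D r t \<and> lay_ok D (last P') r"
proof -
  define h where "h = length T'"
  have h0: "0 < h" using ne h_def by simp
  have lT: "last T' = T' ! (h - 1)" using ne h_def by (simp add: last_conv_nth)
  have "P' \<noteq> []" using ne l by auto
  then have lP: "last P' = P' ! (h - 1)" using l h_def by (simp add: last_conv_nth)
  have nT: "\<And>i. i < h \<Longrightarrow> (T' @ [t]) ! i = T' ! i" using h_def by (simp add: nth_append)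
  have nP: "\<And>i. i < h \<Longrightarrow> (P' @ [r]) ! i = P' ! i" using h_def l by (simp add: nth_append)
  have nT2: "(T' @ [t]) ! h = t" using h_def by simp
  have nP2: "(P' @ [r]) ! h = r" using h_def l by (simp add: nth_append)
  have sh: "Suc (h - 1) = h" using h0 by simp
  show ?thesis
  proof
    assume s: "stk D (T' @ [t]) (P' @ [r])"
    have vt: "valid_tree (T' @ [t])" and rows: "\<forall>i<h+1. row_ok D ((P' @ [r])!i) ((T' @ [t])!i)"
      and lays: "\<forall>i. Suc i < h + 1 \<longrightarrow> lay_ok D ((P' @ [r])!i) ((P' @ [r])!Suc i)"
      using s h_def by (auto simp: stk_def)
    have v1: "length ((T' @ [t])!0) = 1" and v2: "\<forall>i. Suc i < h + 1 \<longrightarrow> length ((T' @ [t]) ! Suc i) = sum_list ((T' @ [t]) ! i)"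
      using vt h_def by (auto simp: valid_tree_def)
    have "valid_tree T'"
      unfolding valid_tree_def
    proof (intro conjI allI impI)
      show "T' \<noteq> []" by fact
      show "length (T' ! 0) = 1" using v1 nT[OF h0] by simp
      fix i assume "Suc i < length T'"
      then show "length (T' ! Suc i) = sum_list (T' ! i)"
        using v2[rule_format, of i] nT[of i] nT[of "Suc i"] h_def by simp
    qed
    moreover have "\<forall>i<length T'. row_ok D (P'!i) (T'!i)"
    proof (intro allI impI)
      fix i assume "i < length T'"
      then show "row_ok D (P'!i) (T'!i)" using rows[rule_format, of i] nP[of i] nT[of i] h_def by simp
    qed
    moreover have "\<forall>i. Suc i < length T' \<longrightarrow> lay_ok D (P'!i) (P'!Suc i)"
    proof (intro allI impI)
      fix i assume "Suc i < length T'"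
      then show "lay_ok D (P'!i) (P'!Suc i)" using lays[rule_format, of i] nP[of i] nP[of "Suc i"] h_def by simp
    qed
    ultimately have "stk D T' P'" using l by (simp add: stk_def)
    moreover have "length t = sum_list (last T')"
      using v2[rule_format, of "h - 1"] sh nT2 nT[of "h-1"] h0 lT by simp
    moreover have "row_ok D r t" using rows nT2 nP2 by auto
    moreover have "lay_ok D (last P') r"
      using lays[rule_format, of "h - 1"] sh nP2 nP[of "h-1"] h0 lP by simp
    ultimately show "stk D T' P' \<and> length t = sum_list (last T') \<and> row_ok D r t \<and> lay_ok D (last P') r"
      by blast
  next
    assume a: "stk D T' P' \<and> length t = sum_list (last T') \<and> row_ok D r t \<and> lay_ok D (last P') r"
    then have vt: "valid_tree T'" and rows: "\<forall>i<h. row_ok D (P'!i) (T'!i)"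
      and lays: "\<forall>i. Suc i < h \<longrightarrow> lay_ok D (P'!i) (P'!Suc i)"
      using h_def by (auto simp: stk_def)
    have "valid_tree (T' @ [t])"
      unfolding valid_tree_def
    proof (intro conjI allI impI)
      show "T' @ [t] \<noteq> []" by simp
      show "length ((T' @ [t]) ! 0) = 1" using vt nT[OF h0] by (simp add: valid_tree_def)
      fix i assume i: "Suc i < length (T' @ [t])"
      show "length ((T' @ [t]) ! Suc i) = sum_list ((T' @ [t]) ! i)"
      proof (cases "Suc i < h")
        case True then show ?thesis using vt nT h_def by (simp add: valid_tree_def)
      next
        case False
        then have "i = h - 1" "Suc i = h" using i h_def by auto
        then show ?thesis using a nT2 nT[of "h - 1"] h0 lT by simp
      qed
    qed
    moreover have "\<forall>i<length (T' @ [t]). row_ok D ((P' @ [r])!i) ((T' @ [t])!i)"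
    proof (intro allI impI)
      fix i assume "i < length (T' @ [t])"
      then have "i < h \<or> i = h" using h_def by auto
      then show "row_ok D ((P' @ [r])!i) ((T' @ [t])!i)" using rows nT nP nT2 nP2 a by auto
    qed
    moreover have "\<forall>i. Suc i < length (T' @ [t]) \<longrightarrow> lay_ok D ((P' @ [r])!i) ((P' @ [r])!Suc i)"
    proof (intro allI impI)
      fix i assume "Suc i < length (T' @ [t])"
      then have "Suc i < h \<or> (Suc i = h \<and> i = h - 1)" using h_def by auto
      then show "lay_ok D ((P' @ [r])!i) ((P' @ [r])!Suc i)"
      proof
        assume "Suc i < h" then show ?thesis using lays nP by simp
      next
        assume "Suc i = h \<and> i = h - 1" then show ?thesis using a nP2 nP[of "h-1"] h0 lP by simp
      qed
    qed
    ultimately show "stk D (T' @ [t]) (P' @ [r])" using l by (simp add: stk_def)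
  qed
qed

lemma all_lt2: "(\<forall>i<(2::nat). Q i) \<longleftrightarrow> Q 0 \<and> Q 1"
  by (auto simp: numeral_2_eq_2 less_Suc_eq)
lemma all_lt2': "(\<forall>i<Suc (Suc 0). Q i) \<longleftrightarrow> Q 0 \<and> Q 1"
  by (auto simp: less_Suc_eq)
lemma all_suc_lt2: "(\<forall>i. Suc i < (2::nat) \<longrightarrow> Q i) \<longleftrightarrow> Q 0"
  by (auto simp: numeral_2_eq_2 less_Suc_eq)

lemma all_len2: "(\<forall>i<length [x, y]. Q i) \<longleftrightarrow> Q 0 \<and> Q 1"
  by (auto simp: less_Suc_eq)
lemma all_suc_len2: "(\<forall>i. Suc i < length [x, y] \<longrightarrow> Q i) \<longleftrightarrow> Q 0"
  by (auto simp: less_Suc_eq)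

lemma decomp2:
  assumes v: "vdc D"
  shows "is_decomp D a [[k], t] [(cleft D g, [g]), r] \<longleftrightarrow>
     a \<in> Cell D \<and> g \<in> Cell D \<and> length (csrc D g) = k \<and> row_ok D r t
     \<and> comp_ok D (fst r) (snd r) g \<and> comp D (fst r) (snd r) g = a"
proof -
  have ic: "iter_comp D [(cleft D g, [g]), r] = comp D (fst r) (snd r) g"
    using iter_comp_snoc[of "[(cleft D g, [g])]" D r] by (simp add: iter_comp_single)
  have s: "is_decomp D a [[k], t] [(cleft D g, [g]), r] \<longleftrightarrow> a \<in> Cell D \<and> length t = sum_list [k]
     \<and> row_ok D (cleft D g, [g]) [k] \<and> row_ok D r t \<and> lay_ok D (cleft D g, [g]) r
     \<and> comp D (fst r) (snd r) g = a"
    unfolding is_decomp_stk stk_def valid_tree_def all_len2 all_suc_len2 ic by auto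
  have r1: "row_ok D (cleft D g, [g]) [k] \<longleftrightarrow> g \<in> Cell D \<and> length (csrc D g) = k"
    unfolding row_ok_def using vdc_cell[OF v] is_row_Cons[OF v] by auto
  have c: "comp_ok D (fst r) (snd r) g \<longleftrightarrow> is_row D (fst r) (snd r) \<and> g \<in> Cell D
     \<and> lay_ok D (cleft D g, [g]) r"
    by (auto simp: comp_ok_def lay_ok_def)
  have l: "map (ctgt D) (snd r) = csrc D g \<Longrightarrow> map (\<lambda>c. length (csrc D c)) (snd r) = t \<Longrightarrow> length t = length (csrc D g)"
    by (metis length_map)
  show ?thesis unfolding s r1 c using l by (auto simp: row_ok_def lay_ok_def)
qed



lemma stk_last_row: "stk D T P \<Longrightarrow> row_ok D (last P) (last T)"
proof -
  assume s: "stk D T P"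
  then have ne: "T \<noteq> []" "length P = length T" by (auto simp: stk_def valid_tree_def)
  then have "P \<noteq> []" by auto
  then have "last P = P ! (length T - 1)" "last T = T ! (length T - 1)" using ne by (auto simp: last_conv_nth)
  moreover have "length T - 1 < length T" using ne by simp
  ultimately show ?thesis using s by (simp add: stk_def)
qed

lemma len_concat_csrc: "length (concat (map (csrc D) cs)) = sum_list (map (\<lambda>c. length (csrc D c)) cs)"
  by (induction cs) auto

lemma decomp_snoc:
  assumes v: "vdc D" and ne: "T' \<noteq> []" and l: "length P' = length T'"
  shows "is_decomp D a (T' @ [t]) (P' @ [r]) \<longleftrightarrow>
    is_decomp D (iter_comp D P') T' P' \<and>
    is_decomp D a [[length t], t] [(cleft D (iter_comp D P'), [iter_comp D P']), r]"
proof -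
  define g where "g = iter_comp D P'"
  have Pne: "P' \<noteq> []" using ne l by auto
  have ic: "iter_comp D (P' @ [r]) = comp D (fst r) (snd r) g" unfolding g_def using iter_comp_snoc[OF Pne] .
  have L: "is_decomp D a (T' @ [t]) (P' @ [r]) \<longleftrightarrow> a \<in> Cell D \<and> stk D T' P' \<and> length t = sum_list (last T')
     \<and> row_ok D r t \<and> lay_ok D (last P') r \<and> comp D (fst r) (snd r) g = a"
    unfolding is_decomp_stk stk_snoc[OF ne l] ic by auto
  have R: "is_decomp D (iter_comp D P') T' P' \<and>
    is_decomp D a [[length t], t] [(cleft D (iter_comp D P'), [iter_comp D P']), r] \<longleftrightarrow>
    g \<in> Cell D \<and> stk D T' P' \<and> a \<in> Cell D \<and> length (csrc D g) = length t \<and> row_ok D r t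
     \<and> comp_ok D (fst r) (snd r) g \<and> comp D (fst r) (snd r) g = a"
    apply (subst decomp2[OF v])
    apply (subst is_decomp_stk)
    unfolding g_def by auto
  show ?thesis
  proof (cases "stk D T' P'")
    case False then show ?thesis using L R g_def by simp
  next
    case True
    note b = stk_bnd[OF v True, folded g_def]
    have "length (csrc D g) = sum_list (last T')"
      using b stk_last_row[OF True] by (simp add: row_ok_def len_concat_csrc)
    moreover have "comp_ok D (fst r) (snd r) g \<longleftrightarrow> is_row D (fst r) (snd r) \<and> lay_ok D (last P') r"
      using b by (auto simp: comp_ok_def lay_ok_def)
    ultimately show ?thesis unfolding L R using b True by (auto simp: row_ok_def)
  qed
qed



definition idr :: "('o, 't, 'l, 'c, 'm) vdc_scheme \<Rightarrow> 'o \<times> 'l list \<times> 'o \<Rightarrow> 't \<times> 'c list" where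
  "idr D A = id_row D (fst A) (fst (snd A))"

lemma is_path_Loose: "is_path D x ps y \<Longrightarrow> set ps \<subseteq> Loose D"
proof (induction ps arbitrary: x)
  case (Cons p ps)
  from Cons.prems have "p \<in> Loose D" "is_path D (lcod D p) ps y" by simp_all
  with Cons.IH show ?case by simp
qed simp

lemma id_row_is_row: "vdc D \<Longrightarrow> is_path D x ps y \<Longrightarrow> is_row D (tid D x) (map (cid D) ps)"
proof (induction ps arbitrary: x)
  case Nil
  have "x \<in> Ob D" using is_path_Ob[OF Nil(1) Nil(2)] by (rule conjunct1)
  then show ?case using vdc_tid[OF Nil(1)] by simp
next
  case (Cons p ps)
  from Cons.prems(2) have p: "p \<in> Loose D" "ldom D p = x" "is_path D (lcod D p) ps y" by simp_all
  have x: "x \<in> Ob D" using is_path_Ob[OF Cons.prems] by simp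
  show ?case unfolding list.map is_row_Cons[OF Cons.prems(1)]
    using vdc_tid[OF Cons.prems(1) x] vdc_cid[OF Cons.prems(1) p(1)] Cons.IH[OF Cons.prems(1) p(3)] p(2) by simp
qed

lemma id_row_between: "vdc D \<Longrightarrow> is_path D x ps y \<Longrightarrow> row_between D (x, ps, y) (x, ps, y) (id_row D x ps)"
proof -
  assume v: "vdc D" and p: "is_path D x ps y"
  have ob: "x \<in> Ob D" "y \<in> Ob D" using is_path_Ob[OF v p] by auto
  have L: "set ps \<subseteq> Loose D" using is_path_Loose[OF p] .
  have "\<forall>j<length ps. csrc D (map (cid D) ps ! j) = [ps ! j] \<and> ctgt D (map (cid D) ps ! j) = ps ! j"
  proof (intro allI impI)
    fix j assume "j < length ps"
    then have "ps ! j \<in> Loose D" using L nth_mem by blast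
    then show "csrc D (map (cid D) ps ! j) = [ps ! j] \<and> ctgt D (map (cid D) ps ! j) = ps ! j"
      using vdc_cid[OF v] \<open>j < length ps\<close> by simp
  qed
  then show ?thesis unfolding row_between_def id_row_def
    using id_row_is_row[OF v p] row_right_tid[OF v p] vdc_tid[OF v ob(1)] vdc_tid[OF v ob(2)] by simp
qed

lemma iface_append: "1 \<le> k \<Longrightarrow> k \<le> length P \<Longrightarrow> iface D (P @ Q) k = iface D P k"
proof -
  assume "1 \<le> k" "k \<le> length P"
  then have "k - 1 < length P" by simp
  then show ?thesis by (simp add: iface_def nth_append)
qed

lemma iface_last: "vdc D \<Longrightarrow> is_decomp D g T P \<Longrightarrow>
   iface D P (length T) = (tdom D (cleft D g), csrc D g, tdom D (cright D g))"
proof -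
  assume v: "vdc D" and d: "is_decomp D g T P"
  then have s: "stk D T P" and g: "iter_comp D P = g" by (auto simp: is_decomp_stk)
  then have ne: "T \<noteq> []" "length P = length T" by (auto simp: stk_def valid_tree_def)
  then have "P \<noteq> []" by auto
  then have "last P = P ! (length T - 1)" using ne by (simp add: last_conv_nth)
  then show ?thesis using stk_bnd[OF v s] g by (simp add: iface_def)
qed

lemma iface_between: "vdc D \<Longrightarrow> stk D T P \<Longrightarrow> 1 \<le> k \<Longrightarrow> k \<le> length T \<Longrightarrow>
  row_between D (iface D P k) (iface D P k) (idr D (iface D P k))"
proof -
  assume v: "vdc D" and s: "stk D T P" and k: "1 \<le> k" "k \<le> length T"
  then have "row_ok D (P!(k-1)) (T!(k-1))" by (auto simp: stk_def)
  then have "is_row D (fst (P!(k-1))) (snd (P!(k-1)))" by (simp add: row_ok_def)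
  from row_path[OF v this] show ?thesis
    unfolding iface_def idr_def using id_row_between[OF v] by simp
qed

lemma lift_morph:
  assumes v: "vdc D" and ne: "T' \<noteq> []" and m: "decomp_morph D g T' Y1 Y2 \<sigma>"
    and d2: "is_decomp D a [[length t], t] [(cleft D g, [g]), r]"
  shows "decomp_morph D a (T' @ [t]) (Y1 @ [r]) (Y2 @ [r]) (\<sigma> @ [id_row D (tdom D (cleft D a)) (csrc D a)])"
proof -
  define h where "h = length T'"
  have h0: "0 < h" using ne h_def by simp
  have y1: "is_decomp D g T' Y1" and y2: "is_decomp D g T' Y2" and ls: "length \<sigma> = h + 1"
    and s0: "\<sigma> ! 0 = id_row D (ldom D (ctgt D g)) [ctgt D g]"
    and sh: "\<sigma> ! h = id_row D (tdom D (cleft D g)) (csrc D g)"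
    and rb: "\<forall>k. 1 \<le> k \<and> k < h \<longrightarrow> row_between D (iface D Y1 k) (iface D Y2 k) (\<sigma> ! k)"
    and lc: "\<forall>i < h. rowcomp D (Y1 ! i) (\<sigma> ! i) = rowcomp D (\<sigma> ! Suc i) (Y2 ! i)"
    using m h_def by (auto simp: decomp_morph_def)
  have l1: "length Y1 = h" and l2: "length Y2 = h" using y1 y2 h_def by (auto simp: is_decomp_def)
  have g1: "iter_comp D Y1 = g" and g2: "iter_comp D Y2 = g" using y1 y2 by (auto simp: is_decomp_def)
  have dd: "a \<in> Cell D" "g \<in> Cell D" "row_ok D r t" "comp_ok D (fst r) (snd r) g" "comp D (fst r) (snd r) g = a"
    using d2 decomp2[OF v] by auto
  note cc = vdc_comp[OF v dd(4)]
  note gc = vdc_cell[OF v dd(2)]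
  have rr: "is_row D (fst r) (snd r)" using dd(3) by (simp add: row_ok_def)
  have ft: "fst r \<in> Tight D" using is_row_Tight[OF rr] .
  have ta: "ctgt D a = ctgt D g" using cc dd(5) by simp
  have D1: "is_decomp D a (T' @ [t]) (Y1 @ [r])" using decomp_snoc[OF v ne] l1 h_def y1 g1 d2 by simp
  have D2: "is_decomp D a (T' @ [t]) (Y2 @ [r])" using decomp_snoc[OF v ne] l2 h_def y2 g2 d2 by simp
  define \<sigma>' where "\<sigma>' = \<sigma> @ [id_row D (tdom D (cleft D a)) (csrc D a)]"
  have n1: "\<And>i. i \<le> h \<Longrightarrow> \<sigma>' ! i = \<sigma> ! i" using ls \<sigma>'_def by (simp add: nth_append)
  have n2: "\<sigma>' ! Suc h = id_row D (tdom D (cleft D a)) (csrc D a)" using ls \<sigma>'_def by (simp add: nth_append)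
  have ny1: "\<And>i. i < h \<Longrightarrow> (Y1 @ [r]) ! i = Y1 ! i" using l1 by (simp add: nth_append)
  have ny2: "\<And>i. i < h \<Longrightarrow> (Y2 @ [r]) ! i = Y2 ! i" using l2 by (simp add: nth_append)
  have nyr1: "(Y1 @ [r]) ! h = r" using l1 by (simp add: nth_append)
  have nyr2: "(Y2 @ [r]) ! h = r" using l2 by (simp add: nth_append)
  have top: "rowcomp D r (\<sigma> ! h) = rowcomp D (id_row D (tdom D (cleft D a)) (csrc D a)) r"
  proof -
    have e1: "csrc D g = map (ctgt D) (snd r)" "tcod D (fst r) = tdom D (cleft D g)"
      using dd(4) by (auto simp: comp_ok_def)
    have "rowcomp D r (\<sigma> ! h) = r"
      using rowcomp_right_unit[OF v rr e1(2)] sh e1(1) by simp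
    moreover
    have ca: "cleft D a = tcomp D (cleft D g) (fst r)" "csrc D a = concat (map (csrc D) (snd r))"
      using cc dd(5) by auto
    have "tdom D (tcomp D (cleft D g) (fst r)) = tdom D (fst r)" using vdc_tcomp[OF v ft] gc e1(2) by simp
    then have "tdom D (cleft D a) = tdom D (fst r)" using ca by simp
    then have "rowcomp D (id_row D (tdom D (cleft D a)) (csrc D a)) r = r"
      using rowcomp_left_unit[OF v rr, of "tdom D (cleft D a)"] ca(2) by simp
    ultimately show ?thesis by simp
  qed
  show ?thesis
    unfolding decomp_morph_def \<sigma>'_def[symmetric]
  proof (intro conjI allI impI)
    show "is_decomp D a (T' @ [t]) (Y1 @ [r])" by fact
    show "is_decomp D a (T' @ [t]) (Y2 @ [r])" by fact
    show "length \<sigma>' = length (T' @ [t]) + 1" using ls h_def \<sigma>'_def by simp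
    show "\<sigma>' ! 0 = id_row D (ldom D (ctgt D a)) [ctgt D a]" using n1[of 0] s0 ta by simp
    show "\<sigma>' ! length (T' @ [t]) = id_row D (tdom D (cleft D a)) (csrc D a)" using n2 h_def by simp
  next
    fix k assume k: "1 \<le> k \<and> k < length (T' @ [t])"
    show "row_between D (iface D (Y1 @ [r]) k) (iface D (Y2 @ [r]) k) (\<sigma>' ! k)"
    proof (cases "k < h")
      case True
      then have "iface D (Y1 @ [r]) k = iface D Y1 k" "iface D (Y2 @ [r]) k = iface D Y2 k"
        using iface_append[where P=Y1 and Q="[r]" and k=k and D=D] iface_append[where P=Y2 and Q="[r]" and k=k and D=D] k l1 l2 by auto
      then show ?thesis using rb k n1 True by simp
    next
      case False
      then have kh: "k = h" using k h_def by simp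
      have "iface D (Y1 @ [r]) k = (tdom D (cleft D g), csrc D g, tdom D (cright D g))"
        using iface_append[where P=Y1 and Q="[r]" and k=k and D=D] iface_last[OF v y1] kh h_def l1 k by simp
      moreover have "iface D (Y2 @ [r]) k = (tdom D (cleft D g), csrc D g, tdom D (cright D g))"
        using iface_append[where P=Y2 and Q="[r]" and k=k and D=D] iface_last[OF v y2] kh h_def l2 k by simp
      ultimately show ?thesis using id_row_between[OF v] gc n1 kh sh by simp
    qed
  next
    fix i assume i: "i < length (T' @ [t])"
    show "rowcomp D ((Y1 @ [r]) ! i) (\<sigma>' ! i) = rowcomp D (\<sigma>' ! Suc i) ((Y2 @ [r]) ! i)"
    proof (cases "i < h")
      case True then show ?thesis using lc ny1 ny2 n1 by simp
    next
      case False
      then have "i = h" using i h_def by simp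
      then show ?thesis using top nyr1 nyr2 n1 n2 by simp
    qed
  qed
qed

lemma lift_equiv:
  assumes v: "vdc D" and ne: "T' \<noteq> []" and e: "decomp_equiv D g T' Y1 Y2"
    and d2: "is_decomp D a [[length t], t] [(cleft D g, [g]), r]"
  shows "decomp_equiv D a (T' @ [t]) (Y1 @ [r]) (Y2 @ [r])"
  using e unfolding decomp_equiv_def
proof (induction rule: rtranclp_induct)
  case base then show ?case by simp
next
  case (step y z)
  from step(2) have "has_decomp_morph D a (T' @ [t]) (y @ [r]) (z @ [r]) \<or> has_decomp_morph D a (T' @ [t]) (z @ [r]) (y @ [r])"
  proof (elim disjE)
    assume "has_decomp_morph D g T' y z"
    then obtain s where "decomp_morph D g T' y z s" unfolding has_decomp_morph_def by blast
    from lift_morph[OF v ne this d2] show ?thesis unfolding has_decomp_morph_def by blast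
  next
    assume "has_decomp_morph D g T' z y"
    then obtain s where "decomp_morph D g T' z y s" unfolding has_decomp_morph_def by blast
    from lift_morph[OF v ne this d2] show ?thesis unfolding has_decomp_morph_def by blast
  qed
  with step.IH show ?case by (simp add: rtranclp.rtrancl_into_rtrancl)
qed



lemma stk_runit:
  assumes v: "vdc D" and s: "stk D T P" and i: "i < length T" and z: "z = ctgt D (hd (snd (P!0)))"
  shows "rowcomp D (P!i) (if i = 0 then id_row D (ldom D z) [z] else idr D (iface D P i)) = P!i"
proof -
  have ro: "row_ok D (P!i) (T!i)" using s i by (simp add: stk_def)
  then have rr: "is_row D (fst (P!i)) (snd (P!i))" by (simp add: row_ok_def)
  show ?thesis
  proof (cases "i = 0")
    case True
    have vt: "length (T!0) = 1" using s by (simp add: stk_def valid_tree_def)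
    then have "length (snd (P!0)) = 1" using ro True unfolding row_ok_def by (metis length_map)
    then obtain c where c: "snd (P!0) = [c]" by (metis One_nat_def length_0_conv length_Suc_conv)
    have cc: "c \<in> Cell D" "cleft D c = fst (P!0)" using rr c True is_row_Cons[OF v] by auto
    have "tcod D (fst (P!0)) = ldom D z" using vdc_cell[OF v cc(1)] cc z c by simp
    from rowcomp_right_unit[OF v rr[unfolded True] this]
    have "rowcomp D (fst (P!0), [c]) (id_row D (ldom D z) [z]) = (fst (P!0), [c])" using c z by simp
    moreover have "P!0 = (fst (P!0), [c])" using c by (metis prod.collapse)
    ultimately show ?thesis using True by metis
  next
    case False
    have "Suc (i - 1) < length T" "Suc (i - 1) = i" using i False by auto
    then have lo: "lay_ok D (P!(i-1)) (P!i)" using s unfolding stk_def by metis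
    then have "tcod D (fst (P!i)) = tdom D (fst (P!(i-1)))" by (simp add: lay_ok_def)
    from rowcomp_right_unit[OF v rr this] lo False show ?thesis
      by (simp add: idr_def iface_def lay_ok_def)
  qed
qed

lemma stk_lunit:
  assumes v: "vdc D" and s: "stk D T P" and i: "i < length T"
  shows "rowcomp D (idr D (iface D P (Suc i))) (P!i) = P!i"
proof -
  have ro: "row_ok D (P!i) (T!i)" using s i by (simp add: stk_def)
  then have rr: "is_row D (fst (P!i)) (snd (P!i))" by (simp add: row_ok_def)
  from rowcomp_left_unit[OF v rr refl] show ?thesis by (simp add: idr_def iface_def)
qed

lemma concat_unary: "length ss = length ps \<Longrightarrow> (\<forall>j<length ps. csrc D (ss ! j) = [ps ! j]) \<Longrightarrow>
   concat (map (csrc D) ss) = ps"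
proof (induction ss arbitrary: ps)
  case Nil then show ?case by simp
next
  case (Cons s ss)
  then obtain p ps' where ps: "ps = p # ps'" by (cases ps) auto
  have "\<forall>j<length ps'. csrc D (ss ! j) = [ps' ! j]" using Cons.prems ps by auto
  then show ?case using Cons ps by (metis (no_types) Cons.prems(2) concat.simps(2) length_Cons list.map(2)
      list.size(4) nat.inject nth_Cons_0 nth_Cons_Suc zero_less_Suc append_Cons append_Nil)
qed



lemma push_morph:
  assumes v: "vdc D" and len: "2 \<le> length T'"
    and m: "decomp_morph D a [[length t], t] [(cleft D g1, [g1]), r1] [(cleft D g2, [g2]), r2] \<sigma>"
    and q: "is_decomp D g2 T' Q'"
  shows "\<exists>P''. is_decomp D g1 T' P'' \<and> has_decomp_morph D a (T' @ [t]) (P'' @ [r1]) (Q' @ [r2])"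
proof -
  define h where "h = length T'"
  define T'' where "T'' = butlast T'"
  define t' where "t' = last T'"
  define Q'' where "Q'' = butlast Q'"
  define qq where "qq = last Q'"
  have lQ: "length Q' = h" using q h_def by (simp add: is_decomp_def)
  have Tne: "T' \<noteq> []" using len by auto
  have Qne: "Q' \<noteq> []" using lQ len h_def by auto
  have TT: "T' = T'' @ [t']" using Tne T''_def t'_def by simp
  have QQ: "Q' = Q'' @ [qq]" using Qne Q''_def qq_def by simp
  have lT'': "length T'' = h - 1" using h_def T''_def by simp
  have lQ'': "length Q'' = h - 1" using lQ Q''_def by simp
  have T''ne: "T'' \<noteq> []" using lT'' len h_def by auto
  define \<delta> where "\<delta> = iter_comp D Q''"
  have qsplit: "is_decomp D \<delta> T'' Q'' \<and> is_decomp D g2 [[length t'], t'] [(cleft D \<delta>, [\<delta>]), qq]"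
    using q decomp_snoc[OF v T''ne, of Q'' g2 t' qq] lT'' lQ'' TT QQ \<delta>_def by simp
  then have qd: "is_decomp D \<delta> T'' Q''" and q2: "is_decomp D g2 [[length t'], t'] [(cleft D \<delta>, [\<delta>]), qq]" by auto
  have qq2: "\<delta> \<in> Cell D" "length (csrc D \<delta>) = length t'" "row_ok D qq t'" "comp_ok D (fst qq) (snd qq) \<delta>"
     "comp D (fst qq) (snd qq) \<delta> = g2"
    using q2 decomp2[OF v] by auto
  note qc = vdc_comp[OF v qq2(4)]
  note \<delta>c = vdc_cell[OF v qq2(1)]
  have qr: "is_row D (fst qq) (snd qq)" using qq2(3) by (simp add: row_ok_def)
  have qft: "fst qq \<in> Tight D" using is_row_Tight[OF qr] .
  have qrt: "row_right D (fst qq) (snd qq) \<in> Tight D" using row_right_Tight[OF v qr] .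
  have qok: "map (ctgt D) (snd qq) = csrc D \<delta>" "tcod D (fst qq) = tdom D (cleft D \<delta>)"
     "tcod D (row_right D (fst qq) (snd qq)) = tdom D (cright D \<delta>)" using qq2(4) by (auto simp: comp_ok_def)
  have g2b: "csrc D g2 = concat (map (csrc D) (snd qq))"
     "tdom D (cleft D g2) = tdom D (fst qq)"
     "tdom D (cright D g2) = tdom D (row_right D (fst qq) (snd qq))"
  proof -
    show "csrc D g2 = concat (map (csrc D) (snd qq))" using qc qq2(5) by auto
    have "tdom D (tcomp D (cleft D \<delta>) (fst qq)) = tdom D (fst qq)" using vdc_tcomp[OF v qft] \<delta>c qok by simp
    then show "tdom D (cleft D g2) = tdom D (fst qq)" using qc qq2(5) by auto
    have "tdom D (tcomp D (cright D \<delta>) (row_right D (fst qq) (snd qq))) = tdom D (row_right D (fst qq) (snd qq))"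
      using vdc_tcomp[OF v qrt] \<delta>c qok by simp
    then show "tdom D (cright D g2) = tdom D (row_right D (fst qq) (snd qq))" using qc qq2(5) by auto
  qed
  have X1: "is_decomp D a [[length t], t] [(cleft D g1, [g1]), r1]" and X2: "is_decomp D a [[length t], t] [(cleft D g2, [g2]), r2]"
    and ls: "length \<sigma> = 3" and s0: "\<sigma> ! 0 = id_row D (ldom D (ctgt D a)) [ctgt D a]"
    and s2: "\<sigma> ! 2 = id_row D (tdom D (cleft D a)) (csrc D a)"
    and rb: "row_between D (iface D [(cleft D g1, [g1]), r1] 1) (iface D [(cleft D g2, [g2]), r2] 1) (\<sigma> ! 1)"
    and c0: "rowcomp D (cleft D g1, [g1]) (\<sigma> ! 0) = rowcomp D (\<sigma> ! 1) (cleft D g2, [g2])"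
    and c1: "rowcomp D r1 (\<sigma> ! 1) = rowcomp D (\<sigma> ! 2) r2"
    using m unfolding decomp_morph_def by (auto simp: numeral_2_eq_2)
  have x1: "a \<in> Cell D" "g1 \<in> Cell D" "comp_ok D (fst r1) (snd r1) g1" "comp D (fst r1) (snd r1) g1 = a"
    using X1 decomp2[OF v] by auto
  have x2: "g2 \<in> Cell D" "comp_ok D (fst r2) (snd r2) g2" "comp D (fst r2) (snd r2) g2 = a"
    using X2 decomp2[OF v] by auto
  note g1c = vdc_cell[OF v x1(2)]
  have ta: "ctgt D g1 = ctgt D a" "ctgt D g2 = ctgt D a"
    using vdc_comp[OF v x1(3)] x1(4) vdc_comp[OF v x2(2)] x2(3) by auto
  define s0' where "s0' = fst (\<sigma> ! 1)"
  define ss where "ss = snd (\<sigma> ! 1)"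
  have sig1: "\<sigma> ! 1 = (s0', ss)" by (simp add: s0'_def ss_def)
  have if1: "iface D [(cleft D g1, [g1]), r1] 1 = (tdom D (cleft D g1), csrc D g1, tdom D (cright D g1))"
    "iface D [(cleft D g2, [g2]), r2] 1 = (tdom D (cleft D g2), csrc D g2, tdom D (cright D g2))"
    by (simp_all add: iface_def)
  have sb: "is_row D s0' ss" "length ss = length (csrc D g1)" "length (csrc D g2) = length (csrc D g1)"
    "\<forall>j<length (csrc D g1). csrc D (ss ! j) = [csrc D g1 ! j] \<and> ctgt D (ss ! j) = csrc D g2 ! j"
    "tdom D s0' = tdom D (cleft D g1)" "tcod D s0' = tdom D (cleft D g2)"
    "tdom D (row_right D s0' ss) = tdom D (cright D g1)" "tcod D (row_right D s0' ss) = tdom D (cright D g2)"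
    using rb unfolding if1 row_between_def sig1 by auto
  have sct: "map (ctgt D) ss = csrc D g2" using sb by (intro nth_equalityI) auto
  have ssrc: "concat (map (csrc D) ss) = csrc D g1" using concat_unary[of ss "csrc D g1" D] sb by auto
  have sun: "\<forall>e\<in>set ss. length (csrc D e) = 1" using sb by (auto simp: in_set_conv_nth)
  have st: "s0' \<in> Tight D" using is_row_Tight[OF sb(1)] .
  have srt: "row_right D s0' ss \<in> Tight D" using row_right_Tight[OF v sb(1)] .
  have g1eq: "g1 = comp D s0' ss g2"
  proof -
    have "tcod D (cleft D g1) = ldom D (ctgt D a)" using g1c ta by simp
    from rowcomp_right_unit[OF v _ this, of "[g1]"]
    have "rowcomp D (cleft D g1, [g1]) (\<sigma> ! 0) = (cleft D g1, [g1])"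
      using s0 ta g1c x1(2) is_row_Cons[OF v] by simp
    moreover have "rowcomp D (\<sigma> ! 1) (cleft D g2, [g2]) = (tcomp D (cleft D g2) s0', rcs D s0' ss [g2])"
      unfolding sig1 using sb(2,3) by (subst rowcomp_rcs) auto
    moreover have "rcs D s0' ss [g2] = [comp D s0' ss g2]" using sb(2,3) by simp
    ultimately show ?thesis using c0 by simp
  qed
  define rs where "rs = rcs D s0' ss (snd qq)"
  define qn where "qn = (tcomp D (fst qq) s0', rs)"
  have tcs: "tcod D s0' = tdom D (fst qq)" using sb(6) g2b(2) by simp
  have tcr: "tcod D (row_right D s0' ss) = tdom D (row_right D (fst qq) (snd qq))" using sb(8) g2b(3) by simp
  have mct: "map (ctgt D) ss = concat (map (csrc D) (snd qq))" using sct g2b(1) by simp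
  have rcq: "rowcomp D (s0', ss) qq = qn"
  proof -
    have "length (concat (map (csrc D) (snd qq))) \<le> length ss" using mct by (metis length_map order_refl)
    then show ?thesis unfolding qn_def rs_def using rowcomp_rcs[of D "snd qq" ss s0' "fst qq"] by simp
  qed
  note rp = rcs_props[OF v sb(1) qr mct tcs, folded rs_def]
  have tqs: "tcomp D (fst qq) s0' \<in> Tight D" "tcod D (tcomp D (fst qq) s0') = tcod D (fst qq)"
    using vdc_tcomp[OF v st qft] tcs by auto
  have trr: "tcod D (tcomp D (row_right D (fst qq) (snd qq)) (row_right D s0' ss)) = tcod D (row_right D (fst qq) (snd qq))"
    using vdc_tcomp[OF v srt qrt] tcr by auto
  have qnrow: "row_ok D qn t'" using rp sun qq2(3) unfolding qn_def row_ok_def by simp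
  have qnok: "comp_ok D (fst qn) (snd qn) \<delta>"
    unfolding comp_ok_def qn_def using rp qq2(1) qok tqs trr by simp
  have qncomp: "comp D (fst qn) (snd qn) \<delta> = g1"
  proof -
    have "comp D s0' ss (comp D (fst qq) (snd qq) \<delta>) =
          comp D (fst (rowcomp D (s0', ss) (fst qq, snd qq))) (snd (rowcomp D (s0', ss) (fst qq, snd qq))) \<delta>"
      using vdc_assoc[OF v qq2(4) sb(1) mct tcs tcr] .
    then show ?thesis using rcq g1eq qq2(5) by simp
  qed
  define P'' where "P'' = Q'' @ [qn]"
  have P''d: "is_decomp D g1 T' P''"
  proof -
    have "is_decomp D g1 [[length t'], t'] [(cleft D \<delta>, [\<delta>]), qn]"
      using decomp2[OF v] x1(2) qq2(1,2) qnrow qnok qncomp by simp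
    then show ?thesis unfolding P''_def TT using decomp_snoc[OF v T''ne, of Q''] lT'' lQ'' qd \<delta>_def by simp
  qed
  have sQ: "stk D T' Q'" and gQ: "iter_comp D Q' = g2" using q by (auto simp: is_decomp_stk)
  have sP: "stk D T' P''" and gP: "iter_comp D P'' = g1" using P''d by (auto simp: is_decomp_stk)
  have lP'': "length P'' = h" using lQ'' P''_def len h_def by simp
  have zz: "ctgt D (hd (snd (Q'!0))) = ctgt D a" using stk_bnd[OF v sQ] gQ ta by simp
  define B where "B = (\<lambda>i. if i = 0 then id_row D (ldom D (ctgt D a)) [ctgt D a] else idr D (iface D Q' i))"
  define \<sigma>' where "\<sigma>' = map B [0..<h] @ [\<sigma> ! 1, \<sigma> ! 2]"
  have nB: "\<And>i. i < h \<Longrightarrow> \<sigma>' ! i = B i" unfolding \<sigma>'_def by (simp add: nth_append)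
  have nh: "\<sigma>' ! h = \<sigma> ! 1" unfolding \<sigma>'_def by (simp add: nth_append)
  have nh1: "\<sigma>' ! Suc h = \<sigma> ! 2" unfolding \<sigma>'_def by (simp add: nth_append)
  have D1: "is_decomp D a (T' @ [t]) (P'' @ [r1])" using decomp_snoc[OF v Tne] lP'' h_def P''d gP X1 by simp
  have D2: "is_decomp D a (T' @ [t]) (Q' @ [r2])" using decomp_snoc[OF v Tne] lQ h_def q gQ X2 by simp
  have nP: "\<And>i. i < h - 1 \<Longrightarrow> (P'' @ [r1]) ! i = Q' ! i"
    unfolding P''_def QQ using lQ'' by (simp add: nth_append)
  have nQ: "\<And>i. i < h \<Longrightarrow> (Q' @ [r2]) ! i = Q' ! i" using lQ by (simp add: nth_append)
  have nPh1: "(P'' @ [r1]) ! (h - 1) = qn" unfolding P''_def using lQ'' by (simp add: nth_append)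
  have nQh1: "Q' ! (h - 1) = qq" unfolding QQ using lQ'' by (simp add: nth_append)
  have nPh: "(P'' @ [r1]) ! h = r1" using lP'' by (simp add: nth_append)
  have nQh: "(Q' @ [r2]) ! h = r2" using lQ by (simp add: nth_append)
  have ifQ: "\<And>k. 1 \<le> k \<Longrightarrow> k < h \<Longrightarrow> iface D (P'' @ [r1]) k = iface D Q' k \<and> iface D (Q' @ [r2]) k = iface D Q' k"
  proof -
    fix k assume k: "1 \<le> k" "k < h"
    have "iface D (P'' @ [r1]) k = iface D P'' k" using iface_append[where P=P'' and Q="[r1]" and k=k and D=D] k lP'' by simp
    also have "\<dots> = iface D Q'' k" unfolding P''_def using iface_append[where P=Q'' and Q="[qn]" and k=k and D=D] k lQ'' by simp
    also have "\<dots> = iface D Q' k" unfolding QQ using iface_append[where P=Q'' and Q="[qq]" and k=k and D=D] k lQ'' by simp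
    finally show "iface D (P'' @ [r1]) k = iface D Q' k \<and> iface D (Q' @ [r2]) k = iface D Q' k"
      using iface_append[where P=Q' and Q="[r2]" and k=k and D=D] k lQ by simp
  qed
  have "decomp_morph D a (T' @ [t]) (P'' @ [r1]) (Q' @ [r2]) \<sigma>'"
    unfolding decomp_morph_def
  proof (intro conjI allI impI)
    show "is_decomp D a (T' @ [t]) (P'' @ [r1])" by fact
    show "is_decomp D a (T' @ [t]) (Q' @ [r2])" by fact
    show "length \<sigma>' = length (T' @ [t]) + 1" unfolding \<sigma>'_def h_def by simp
    show "\<sigma>' ! 0 = id_row D (ldom D (ctgt D a)) [ctgt D a]" using nB[of 0] len h_def B_def Tne by simp
    show "\<sigma>' ! length (T' @ [t]) = id_row D (tdom D (cleft D a)) (csrc D a)" using nh1 s2 h_def by simp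
  next
    fix k assume k: "1 \<le> k \<and> k < length (T' @ [t])"
    show "row_between D (iface D (P'' @ [r1]) k) (iface D (Q' @ [r2]) k) (\<sigma>' ! k)"
    proof (cases "k < h")
      case True
      then have "\<sigma>' ! k = idr D (iface D Q' k)" using nB B_def k by simp
      then show ?thesis using ifQ[of k] True k iface_between[OF v sQ, of k] h_def by simp
    next
      case False
      then have kh: "k = h" using k h_def by simp
      have "iface D (P'' @ [r1]) k = (tdom D (cleft D g1), csrc D g1, tdom D (cright D g1))"
        using iface_append[where P=P'' and Q="[r1]" and k=k and D=D] iface_last[OF v P''d] kh h_def lP'' k by simp
      moreover have "iface D (Q' @ [r2]) k = (tdom D (cleft D g2), csrc D g2, tdom D (cright D g2))"
        using iface_append[where P=Q' and Q="[r2]" and k=k and D=D] iface_last[OF v q] kh h_def lQ k by simp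
      ultimately show ?thesis using rb if1 nh kh by simp
    qed
  next
    fix i assume i: "i < length (T' @ [t])"
    show "rowcomp D ((P'' @ [r1]) ! i) (\<sigma>' ! i) = rowcomp D (\<sigma>' ! Suc i) ((Q' @ [r2]) ! i)"
    proof -
      have "i < h - 1 \<or> i = h - 1 \<or> i = h" using i h_def by auto
      then consider "i < h - 1" | "i = h - 1" | "i = h" by blast
      then show ?thesis
      proof cases
        case 1
        then have i1: "i < h" "Suc i < h" by auto
        have "rowcomp D (Q'!i) (B i) = Q'!i" using stk_runit[OF v sQ _ zz[symmetric]] i1 h_def B_def by simp
        moreover have "rowcomp D (B (Suc i)) (Q'!i) = Q'!i" using stk_lunit[OF v sQ] i1 h_def B_def by simp
        ultimately show ?thesis using nP[OF 1] nQ[OF i1(1)] nB[OF i1(1)] nB[OF i1(2)] by simp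
      next
        case 2
        have hh: "h - 1 < h" "Suc (h - 1) = h" "h - 1 \<noteq> 0" using len h_def by auto
        have "iface D Q' (h - 1) = iface D Q'' (h - 1)" unfolding QQ using iface_append[where P=Q'' and Q="[qq]" and k="h-1" and D=D] lQ'' len h_def by simp
        also have "\<dots> = (tdom D (cleft D \<delta>), csrc D \<delta>, tdom D (cright D \<delta>))"
          using iface_last[OF v qd] lT'' by simp
        finally have "\<sigma>' ! (h - 1) = id_row D (tdom D (cleft D \<delta>)) (csrc D \<delta>)"
          using nB[OF hh(1)] B_def hh(3) by (simp add: idr_def)
        moreover have "rowcomp D qn (id_row D (tdom D (cleft D \<delta>)) (csrc D \<delta>)) = qn"
        proof -
          have "is_row D (fst qn) (snd qn)" using qnrow by (simp add: row_ok_def)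
          moreover have "tcod D (fst qn) = tdom D (cleft D \<delta>)" using qnok by (simp add: comp_ok_def)
          moreover have "map (ctgt D) (snd qn) = csrc D \<delta>" using qnok by (simp add: comp_ok_def)
          ultimately show ?thesis using rowcomp_right_unit[OF v, of "fst qn" "snd qn"] by auto
        qed
        ultimately show ?thesis using 2 nPh1 nh hh nQ[OF hh(1)] nQh1 rcq sig1 by simp
      next
        case 3
        then show ?thesis using nPh nQh nh nh1 c1 by simp
      qed
    qed
  qed
  then show ?thesis using P''d unfolding has_decomp_morph_def by blast
qed



lemma valid_tree_snoc:
  assumes ne: "T' \<noteq> []"
  shows "valid_tree (T' @ [t]) \<longleftrightarrow> valid_tree T' \<and> length t = sum_list (last T')"
proof -
  define h where "h = length T'"
  have h0: "0 < h" using ne h_def by simp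
  have lT: "last T' = T' ! (h - 1)" using ne h_def by (simp add: last_conv_nth)
  have nT: "\<And>i. i < h \<Longrightarrow> (T' @ [t]) ! i = T' ! i" using h_def by (simp add: nth_append)
  have nT2: "(T' @ [t]) ! h = t" using h_def by simp
  have sh: "Suc (h - 1) = h" using h0 by simp
  show ?thesis
  proof
    assume vt: "valid_tree (T' @ [t])"
    have v1: "length ((T' @ [t])!0) = 1" and v2: "\<forall>i. Suc i < h + 1 \<longrightarrow> length ((T' @ [t]) ! Suc i) = sum_list ((T' @ [t]) ! i)"
      using vt h_def by (auto simp: valid_tree_def)
    have "valid_tree T'"
      unfolding valid_tree_def
    proof (intro conjI allI impI)
      show "T' \<noteq> []" by fact
      show "length (T' ! 0) = 1" using v1 nT[OF h0] by simp
      fix i assume "Suc i < length T'"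
      then show "length (T' ! Suc i) = sum_list (T' ! i)"
        using v2[rule_format, of i] nT[of i] nT[of "Suc i"] h_def by simp
    qed
    moreover have "length t = sum_list (last T')"
      using v2[rule_format, of "h - 1"] sh nT2 nT[of "h-1"] h0 lT by simp
    ultimately show "valid_tree T' \<and> length t = sum_list (last T')" by blast
  next
    assume a: "valid_tree T' \<and> length t = sum_list (last T')"
    then have vt: "valid_tree T'" by simp
    show "valid_tree (T' @ [t])"
      unfolding valid_tree_def
    proof (intro conjI allI impI)
      show "T' @ [t] \<noteq> []" by simp
      show "length ((T' @ [t]) ! 0) = 1" using vt nT[OF h0] by (simp add: valid_tree_def)
      fix i assume i: "Suc i < length (T' @ [t])"
      show "length ((T' @ [t]) ! Suc i) = sum_list ((T' @ [t]) ! i)"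
      proof (cases "Suc i < h")
        case True then show ?thesis using vt nT h_def by (simp add: valid_tree_def)
      next
        case False
        then have "i = h - 1" "Suc i = h" using i h_def by auto
        then show ?thesis using a nT2 nT[of "h - 1"] h0 lT by simp
      qed
    qed
  qed
qed

lemma shape2:
  assumes v: "vdc D" and d: "is_decomp D a [[k], t] X"
  shows "\<exists>g r. X = [(cleft D g, [g]), r]"
proof -
  have s: "stk D [[k], t] X" using d by (simp add: is_decomp_stk)
  then have l: "length X = 2" by (simp add: stk_def)
  have "row_ok D (X!0) ([[k], t]!0)" using s unfolding stk_def by auto
  then have r0: "is_row D (fst (X!0)) (snd (X!0))" "length (snd (X!0)) = 1"
    unfolding row_ok_def by (auto dest: arg_cong[where f=length])
  then obtain g where g: "snd (X!0) = [g]" by (metis One_nat_def length_0_conv length_Suc_conv)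
  then have "fst (X!0) = cleft D g" using r0 is_row_Cons[OF v] by auto
  then have x0: "X!0 = (cleft D g, [g])" using g by (metis prod.collapse)
  have "X = [X!0, X!1]" using l by (cases X; cases "tl X") (auto simp: numeral_2_eq_2)
  then show ?thesis using x0 by metis
qed

lemma step_ess:
  assumes v: "vdc D"
    and H2: "\<forall>a \<in> Cell D. \<forall>T. valid_tree T \<and> tree_height T = 2 \<and> tree_leaves T = length (csrc D a)
        \<longrightarrow> ess_unique_decomp D a T"
    and IH: "\<forall>a \<in> Cell D. \<forall>T. valid_tree T \<and> length T = m \<and> tree_leaves T = length (csrc D a)
        \<longrightarrow> ess_unique_decomp D a T"
    and m2: "2 \<le> m" and ac: "a \<in> Cell D" and vt: "valid_tree T" and lT: "length T = Suc m"
    and lv: "tree_leaves T = length (csrc D a)"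
  shows "ess_unique_decomp D a T"
proof -
  define T' where "T' = butlast T"
  define t where "t = last T"
  have Tne: "T \<noteq> []" using lT by auto
  have TT: "T = T' @ [t]" using Tne T'_def t_def by simp
  have lT': "length T' = m" using lT T'_def by simp
  have T'ne: "T' \<noteq> []" using lT' m2 by auto
  have vt': "valid_tree T'" and lt: "length t = sum_list (last T')"
    using vt valid_tree_snoc[OF T'ne, of t] TT by auto
  define T2 where "T2 = [[length t], t]"
  have vT2: "valid_tree T2" unfolding T2_def valid_tree_def by (auto simp: all_suc_len2)
  have e2: "ess_unique_decomp D a T2"
    using H2 ac vT2 lv TT unfolding T2_def by (simp add: tree_height_def tree_leaves_def)
  have low: "\<And>g r. is_decomp D a T2 [(cleft D g, [g]), r] \<Longrightarrow> ess_unique_decomp D g T'"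
  proof -
    fix g r assume "is_decomp D a T2 [(cleft D g, [g]), r]"
    then have "g \<in> Cell D" "length (csrc D g) = length t" using decomp2[OF v] unfolding T2_def by auto
    then show "ess_unique_decomp D g T'" using IH vt' lT' lt by (simp add: tree_leaves_def)
  qed
  define L where "L = (\<lambda>X Y. \<exists>g r Y'. X = [(cleft D g, [g]), r] \<and> is_decomp D a T2 X \<and> is_decomp D g T' Y' \<and> Y = Y' @ [r])"
  have sameX: "\<And>X Y1 Y2. L X Y1 \<Longrightarrow> L X Y2 \<Longrightarrow> decomp_equiv D a T Y1 Y2"
  proof -
    fix X Y1 Y2 assume "L X Y1" "L X Y2"
    then obtain g r Y1' g' r' Y2' where a1: "X = [(cleft D g, [g]), r]" "is_decomp D a T2 X" "is_decomp D g T' Y1'" "Y1 = Y1' @ [r]"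
      and a2: "X = [(cleft D g', [g']), r']" "is_decomp D g' T' Y2'" "Y2 = Y2' @ [r']"
      unfolding L_def by blast
    then have gg: "g' = g" "r' = r" by auto
    have "decomp_equiv D g T' Y1' Y2'" using low[of g r] a1 a2 gg unfolding ess_unique_decomp_def by auto
    from lift_equiv[OF v T'ne this, of a t r] show "decomp_equiv D a T Y1 Y2"
      using a1 a2 gg TT T2_def by simp
  qed
  have ex: "\<And>g r. is_decomp D a T2 [(cleft D g, [g]), r] \<Longrightarrow> \<exists>Y. L [(cleft D g, [g]), r] Y"
  proof -
    fix g r assume d: "is_decomp D a T2 [(cleft D g, [g]), r]"
    then obtain Y' where "is_decomp D g T' Y'" using low unfolding ess_unique_decomp_def by blast
    then show "\<exists>Y. L [(cleft D g, [g]), r] Y" unfolding L_def using d by blast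
  qed
  have eqv_sym: "\<And>P Q. decomp_equiv D a T P Q \<Longrightarrow> decomp_equiv D a T Q P"
  proof -
    fix P Q assume "decomp_equiv D a T P Q"
    then show "decomp_equiv D a T Q P" unfolding decomp_equiv_def
    proof (induction rule: rtranclp_induct)
      case base then show ?case by simp
    next
      case (step y z)
      then have "(\<lambda>P Q. has_decomp_morph D a T P Q \<or> has_decomp_morph D a T Q P) z y" by blast
      with step.IH show ?case by (simp add: converse_rtranclp_into_rtranclp)
    qed
  qed
  have eqv_trans: "\<And>P Q R. decomp_equiv D a T P Q \<Longrightarrow> decomp_equiv D a T Q R \<Longrightarrow> decomp_equiv D a T P R"
    unfolding decomp_equiv_def by (rule rtranclp_trans)
  have mstep: "\<And>P Q. has_decomp_morph D a T P Q \<Longrightarrow> decomp_equiv D a T P Q"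
    unfolding decomp_equiv_def by (simp add: r_into_rtranclp)
  have claim: "\<And>X1 X2. decomp_equiv D a T2 X1 X2 \<Longrightarrow> \<forall>Y1 Y2. L X1 Y1 \<longrightarrow> L X2 Y2 \<longrightarrow> decomp_equiv D a T Y1 Y2"
  proof -
    fix X1 X2 assume "decomp_equiv D a T2 X1 X2"
    then have "(\<lambda>P Q. has_decomp_morph D a T2 P Q \<or> has_decomp_morph D a T2 Q P)\<^sup>*\<^sup>* X1 X2"
      by (simp add: decomp_equiv_def)
    then show "\<forall>Y1 Y2. L X1 Y1 \<longrightarrow> L X2 Y2 \<longrightarrow> decomp_equiv D a T Y1 Y2"
    proof (induction rule: rtranclp_induct)
      case base then show ?case using sameX by blast
    next
      case (step Xm X2)
      show ?case
      proof (intro allI impI)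
        fix Y1 Y2 assume y1: "L X1 Y1" and y2: "L X2 Y2"
        then obtain g2 r2 Y2' where x2: "X2 = [(cleft D g2, [g2]), r2]" "is_decomp D a T2 X2"
          unfolding L_def by blast
        from step(2) show "decomp_equiv D a T Y1 Y2"
        proof
          assume "has_decomp_morph D a T2 Xm X2"
          then obtain \<sigma> where ms: "decomp_morph D a T2 Xm X2 \<sigma>" unfolding has_decomp_morph_def by blast
          then have xm: "is_decomp D a T2 Xm" by (simp add: decomp_morph_def)
          then obtain gm rm where xme: "Xm = [(cleft D gm, [gm]), rm]" using shape2[OF v] T2_def by blast
          obtain Q' where q: "is_decomp D g2 T' Q'" using low x2 unfolding ess_unique_decomp_def by blast
          from push_morph[OF v _ ms[unfolded xme x2 T2_def] q] lT' m2
          obtain P'' where p: "is_decomp D gm T' P''" and hm: "has_decomp_morph D a (T' @ [t]) (P'' @ [rm]) (Q' @ [r2])"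
            by auto
          have "L Xm (P'' @ [rm])" unfolding L_def using xme xm p by blast
          then have e1: "decomp_equiv D a T Y1 (P'' @ [rm])" using step.IH y1 by blast
          have e2: "decomp_equiv D a T (P'' @ [rm]) (Q' @ [r2])" using mstep hm TT by simp
          have "L X2 (Q' @ [r2])" unfolding L_def using x2 q by blast
          then have e3: "decomp_equiv D a T (Q' @ [r2]) Y2" using sameX y2 by blast
          show ?thesis using eqv_trans[OF e1 eqv_trans[OF e2 e3]] .
        next
          assume "has_decomp_morph D a T2 X2 Xm"
          then obtain \<sigma> where ms: "decomp_morph D a T2 X2 Xm \<sigma>" unfolding has_decomp_morph_def by blast
          then have xm: "is_decomp D a T2 Xm" by (simp add: decomp_morph_def)
          then obtain gm rm where xme: "Xm = [(cleft D gm, [gm]), rm]" using shape2[OF v] T2_def by blast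
          obtain Q' where q: "is_decomp D gm T' Q'" using low xm xme unfolding ess_unique_decomp_def by blast
          from push_morph[OF v _ ms[unfolded xme x2 T2_def] q] lT' m2
          obtain P'' where p: "is_decomp D g2 T' P''" and hm: "has_decomp_morph D a (T' @ [t]) (P'' @ [r2]) (Q' @ [rm])"
            by auto
          have "L Xm (Q' @ [rm])" unfolding L_def using xme xm q by blast
          then have e1: "decomp_equiv D a T Y1 (Q' @ [rm])" using step.IH y1 by blast
          have e2: "decomp_equiv D a T (Q' @ [rm]) (P'' @ [r2])" using eqv_sym mstep hm TT by simp
          have "L X2 (P'' @ [r2])" unfolding L_def using x2 p by blast
          then have e3: "decomp_equiv D a T (P'' @ [r2]) Y2" using sameX y2 by blast
          show ?thesis using eqv_trans[OF e1 eqv_trans[OF e2 e3]] .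
        qed
      qed
    qed
  qed
  have split: "\<And>P. is_decomp D a T P \<Longrightarrow> \<exists>X. is_decomp D a T2 X \<and> L X P"
  proof -
    fix P assume d: "is_decomp D a T P"
    then have lP: "length P = Suc m" using lT by (simp add: is_decomp_def)
    define P' where "P' = butlast P"
    define r where "r = last P"
    have PP: "P = P' @ [r]" using lP P'_def r_def by (metis append_butlast_last_id list.size(3) nat.distinct(1))
    have lP': "length P' = length T'" using lP lT' P'_def by simp
    have "is_decomp D (iter_comp D P') T' P' \<and>
      is_decomp D a [[length t], t] [(cleft D (iter_comp D P'), [iter_comp D P']), r]"
      using d decomp_snoc[OF v T'ne lP'] PP TT by simp
    then show "\<exists>X. is_decomp D a T2 X \<and> L X P" unfolding L_def T2_def using PP by blast
  qed
  show ?thesis unfolding ess_unique_decomp_def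
  proof (intro conjI allI impI)
    obtain X where "is_decomp D a T2 X" using e2 unfolding ess_unique_decomp_def by blast
    moreover then obtain g r where "X = [(cleft D g, [g]), r]" using shape2[OF v] T2_def by blast
    ultimately obtain Y where "L X Y" using ex by blast
    then obtain g r Y' where l: "X = [(cleft D g, [g]), r]" "is_decomp D a T2 X" "is_decomp D g T' Y'"
      unfolding L_def by blast
    then have "iter_comp D Y' = g" "length Y' = length T'" by (auto simp: is_decomp_def)
    then have "is_decomp D a T (Y' @ [r])" using decomp_snoc[OF v T'ne, of Y' a t r] l TT T2_def by simp
    then show "\<exists>P. is_decomp D a T P" by blast
  next
    fix P Q assume "is_decomp D a T P \<and> is_decomp D a T Q"
    then obtain XP XQ where "is_decomp D a T2 XP" "L XP P" "is_decomp D a T2 XQ" "L XQ Q" using split by blast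
    moreover then have "decomp_equiv D a T2 XP XQ" using e2 unfolding ess_unique_decomp_def by blast
    ultimately show "decomp_equiv D a T P Q" using claim by blast
  qed
qed

theorem corollary4p11:
  fixes D :: "('o, 't, 'l, 'c, 'm) vdc_scheme"
  assumes "vdc D"
  shows "has_decomposable_multicells D \<longleftrightarrow>
    (\<forall>a \<in> Cell D. \<forall>T. valid_tree T \<and> tree_height T = 2 \<and> tree_leaves T = length (csrc D a)
        \<longrightarrow> ess_unique_decomp D a T)"
proof
  assume "has_decomposable_multicells D"
  then show "\<forall>a \<in> Cell D. \<forall>T. valid_tree T \<and> tree_height T = 2 \<and> tree_leaves T = length (csrc D a)
        \<longrightarrow> ess_unique_decomp D a T" unfolding has_decomposable_multicells_def by simp
next
  assume H2: "\<forall>a \<in> Cell D. \<forall>T. valid_tree T \<and> tree_height T = 2 \<and> tree_leaves T = length (csrc D a)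
        \<longrightarrow> ess_unique_decomp D a T"
  have all: "\<forall>a \<in> Cell D. \<forall>T. valid_tree T \<and> length T = n + 2 \<and> tree_leaves T = length (csrc D a)
        \<longrightarrow> ess_unique_decomp D a T" for n
  proof (induction n)
    case 0 then show ?case using H2 by (simp add: tree_height_def)
  next
    case (Suc n)
    show ?case
    proof (intro ballI allI impI)
      fix a T assume a: "a \<in> Cell D" and T: "valid_tree T \<and> length T = Suc n + 2 \<and> tree_leaves T = length (csrc D a)"
      show "ess_unique_decomp D a T"
        using step_ess[OF assms H2 Suc.IH _ a, of T] T by simp
    qed
  qed
  show "has_decomposable_multicells D"
    unfolding has_decomposable_multicells_def
  proof (intro ballI allI impI)
    fix a T assume a: "a \<in> Cell D" and T: "valid_tree T \<and> 2 \<le> tree_height T \<and> tree_leaves T = length (csrc D a)"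
    then have "2 \<le> length T" by (simp add: tree_height_def)
    then have "length T = (length T - 2) + 2" by arith
    then show "ess_unique_decomp D a T" using all[of "length T - 2"] a T by metis
  qed
qed

end
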